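(* Let $d \geq 3$ and let $C \subset \mathbb{R}^d$ be a smooth $d$-dimensional combinatorial cube with faces labeled $F_I^J$ via a fixed face-poset isomorphism with $[0,1]^d$. Suppose that every smooth combinatorial cube of dimension smaller than $d$ has two parallel facets. Fix $x,y \in \{1,\dots,d\}$ with $x\neq y$, and suppose that the four $(d-2)$-dimensional faces $F_{xy}, F_{x\bar y}, F_{\bar x y}, F_{\bar x\bar y}$ are all parallel to one another. Then either $F_x$ and $F_{\bar x}$ are parallel, or $F_y$ and $F_{\bar y}$ are parallel.
   Context: A lattice polytope is the convex hull of finitely many points of $\mathbb{Z}^n$. An $n$-dimensional polytope is simple if each vertex lies in exactly $n$ edges; the primitive edge directions at a vertex are the smallest lattice vectors along its incident edges; an $n$-dimensional lattice polytope in $\mathbb{R}^n$ is smooth if it is simple and at every vertex the primitive edge directions form a basis of $\mathbb{Z}^n$. An $n$-dimensional combinatorial cube is a polytope whose face poset is isomorphic to that of $[0,1]^n$. For disjoint $I,J \subseteq \{1,\dots,d\}$ the face of $[0,1]^d$ given by $x_k=0$ for $k\in I$ and $x_k = 1$ for $k \in J$ is denoted $F_I^J$, and the corresponding face of $C$ is also denoted $F_I^J$. Elements of $J$ are written with a bar and elements of $I$ without, e.g. $F_{x\bar y} = F_{\{x\}}^{\{y\}}$, $F_{\bar x} = F_\emptyset^{\{x\}}$, $F_x = F_{\{x\}}^\emptyset$. Two faces $F,G$ are parallel if $\mathrm{lin}(F)=\mathrm{lin}(G)$, where $\mathrm{lin}(F)$ is the linear subspace parallel to the affine hull of $F$. 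*)

theory Defs
  imports "HOL-Analysis.Analysis"
begin

text \<open>A lower-dimensional space R^k is
modelled as the coordinate subspace indexed by a set K of coordinates with card K = k,
with lattice the integer points of that subspace.\<close>

definition integral_vec :: "real^'d \<Rightarrow> bool" where
  "integral_vec v \<longleftrightarrow> (\<forall>i. v $ i \<in> \<int>)"

definition coord_space :: "'d set \<Rightarrow> (real^'d) set" where
  "coord_space K = {v. \<forall>i. i \<notin> K \<longrightarrow> v $ i = 0}"

definition lattice_polytope :: "(real^'d) set \<Rightarrow> bool" where
  "lattice_polytope P \<longleftrightarrow>
     (\<exists>S. finite S \<and> (\<forall>v\<in>S. integral_vec v) \<and> P = convex hull S)"

definition edges_at :: "(real^'d) set \<Rightarrow> real^'d \<Rightarrow> (real^'d) set set" where
  "edges_at P v = {E. E face_of P \<and> aff_dim E = 1 \<and> v \<in> E}"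

definition simple_polytope :: "nat \<Rightarrow> (real^'d) set \<Rightarrow> bool" where
  "simple_polytope n P \<longleftrightarrow> (\<forall>v. v extreme_point_of P \<longrightarrow> card (edges_at P v) = n)"

definition prim_edge_dirs :: "(real^'d) set \<Rightarrow> real^'d \<Rightarrow> (real^'d) set" where
  "prim_edge_dirs P v = {u. integral_vec u \<and> u \<noteq> 0 \<and>
      (\<exists>E\<in>edges_at P v. \<exists>t>0. v + t *\<^sub>R u \<in> E) \<and>
      (\<forall>t. 0 < t \<and> t < 1 \<longrightarrow> \<not> integral_vec (t *\<^sub>R u))}"

definition lattice_basis :: "'d set \<Rightarrow> (real^'d) set \<Rightarrow> bool" where
  "lattice_basis K B \<longleftrightarrow>
     B \<subseteq> coord_space K \<and> (\<forall>b\<in>B. integral_vec b) \<and> independent B \<and>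
     (\<forall>z. integral_vec z \<and> z \<in> coord_space K \<longrightarrow>
        (\<exists>c. (\<forall>b\<in>B. c b \<in> \<int>) \<and> z = (\<Sum>b\<in>B. c b *\<^sub>R b)))"

definition smooth_polytope :: "'d set \<Rightarrow> (real^'d) set \<Rightarrow> bool" where
  "smooth_polytope K P \<longleftrightarrow>
     lattice_polytope P \<and> P \<subseteq> coord_space K \<and> aff_dim P = int (card K) \<and>
     simple_polytope (card K) P \<and>
     (\<forall>v. v extreme_point_of P \<longrightarrow> lattice_basis K (prim_edge_dirs P v))"

definition unit_cube :: "'d set \<Rightarrow> (real^'d) set" where
  "unit_cube K = {v. (\<forall>i\<in>K. 0 \<le> v $ i \<and> v $ i \<le> 1) \<and> (\<forall>i. i \<notin> K \<longrightarrow> v $ i = 0)}"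

definition face_poset_iso ::
    "'d set \<Rightarrow> (real^'d) set \<Rightarrow> ((real^'d) set \<Rightarrow> (real^'d) set) \<Rightarrow> bool" where
  "face_poset_iso K P \<phi> \<longleftrightarrow>
     bij_betw \<phi> {F. F face_of P} {G. G face_of unit_cube K} \<and>
     (\<forall>F G. F face_of P \<and> G face_of P \<longrightarrow> (F \<subseteq> G \<longleftrightarrow> \<phi> F \<subseteq> \<phi> G))"

definition comb_cube :: "'d set \<Rightarrow> (real^'d) set \<Rightarrow> bool" where
  "comb_cube K P \<longleftrightarrow> (\<exists>\<phi>. face_poset_iso K P \<phi>)"

definition cube_face :: "'d set \<Rightarrow> 'd set \<Rightarrow> (real^'d) set" where
  "cube_face I J = {v \<in> unit_cube UNIV. (\<forall>k\<in>I. v $ k = 0) \<and> (\<forall>k\<in>J. v $ k = 1)}"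

definition lab_face ::
    "(real^'d) set \<Rightarrow> ((real^'d) set \<Rightarrow> (real^'d) set) \<Rightarrow> 'd set \<Rightarrow> 'd set \<Rightarrow> (real^'d) set" where
  "lab_face P \<phi> I J = inv_into {F. F face_of P} \<phi> (cube_face I J)"

definition lin_space :: "(real^'d) set \<Rightarrow> (real^'d) set" where
  "lin_space F = span {u - w | u w. u \<in> F \<and> w \<in> F}"

definition parallel_faces :: "(real^'d) set \<Rightarrow> (real^'d) set \<Rightarrow> bool" where
  "parallel_faces F G \<longleftrightarrow> lin_space F = lin_space G"

end

theory Submission
  imports Defs
begin


lemma final_alg:
  fixes a1 b1 a2 b2 a3 b3 a4 b4 e :: real
  assumes h41: "a4*b1 - b4*a1 = e" and h12: "a1*b2 - b1*a2 = e" and h23: "a2*b3 - b2*a3 = e"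
    and h34: "a3*b4 - b3*a4 = e" and e: "e = 1 \<or> e = -1"
  shows "(a3 = -a1 \<and> b3 = -b1) \<or> (a4 = -a2 \<and> b4 = -b2)"
proof -
  define k where "k = a1*b3 - b1*a3"
  define m where "m = a2*b4 - b2*a4"
  have ee: "e*e = 1" using e by auto
  have "(a2*b3 - b2*a3)*a1 + (a3*b1-b3*a1)*a2 + (a1*b2-b1*a2)*a3 = 0"
       "(a2*b3 - b2*a3)*b1 + (a3*b1-b3*a1)*b2 + (a1*b2-b1*a2)*b3 = 0" by (simp_all add: algebra_simps)
  then have i1: "e*a1 - k*a2 + e*a3 = 0" "e*b1 - k*b2 + e*b3 = 0"
    unfolding k_def h12 h23 by (simp_all add: algebra_simps)
  have "(a3*b4 - b3*a4)*a2 + (a4*b2-b4*a2)*a3 + (a2*b3-b2*a3)*a4 = 0"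
       "(a3*b4 - b3*a4)*b2 + (a4*b2-b4*a2)*b3 + (a2*b3-b2*a3)*b4 = 0" by (simp_all add: algebra_simps)
  then have i2: "e*a2 - m*a3 + e*a4 = 0" "e*b2 - m*b3 + e*b4 = 0"
    unfolding m_def h34 h23 by (simp_all add: algebra_simps)
  have "(e*a1 - k*a2 + e*a3)*b4 - (e*b1 - k*b2 + e*b3)*a4 = 0" using i1 by simp
  moreover have "(e*a1 - k*a2 + e*a3)*b4 - (e*b1 - k*b2 + e*b3)*a4 = e*(a1*b4 - b1*a4) - k*(a2*b4-b2*a4) + e*(a3*b4-b3*a4)"
    by (simp add: algebra_simps)
  ultimately have eq: "e*(a1*b4 - b1*a4) - k*(a2*b4-b2*a4) + e*(a3*b4-b3*a4) = 0" by simp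
  have "a1*b4 - b1*a4 = -(a4*b1 - b4*a1)" by (simp add: algebra_simps)
  then have d14: "a1*b4 - b1*a4 = -e" using h41 by simp
  have "e*(-e) - k*m + e*e = 0" using eq by (simp only: d14 h34 m_def[symmetric])
  then have "k*m = 0" by simp
  then have "k = 0 \<or> m = 0" by simp
  then show ?thesis
  proof
    assume "k = 0"
    with i1 have "e*(a1+a3) = 0" "e*(b1+b3) = 0" by (simp_all add: algebra_simps)
    then show ?thesis using e by auto
  next
    assume "m = 0"
    with i2 have "e*(a2+a4) = 0" "e*(b2+b4) = 0" by (simp_all add: algebra_simps)
    then show ?thesis using e by auto
  qed
qed


lemma sign_lem:
  fixes g1 g2 p1 p2 a1 a2 b1 b2 :: real
  assumes g: "g1*p1 + g2*p2 = 0" and ga: "g1*a1 + g2*a2 < 0" and gb: "g1*b1 + g2*b2 > 0"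
    and p: "p1 \<noteq> 0 \<or> p2 \<noteq> 0"
  shows "(b1*p2 - b2*p1) * (p1*a2 - p2*a1) > 0"
proof -
  have neg: "(g1*a1 + g2*a2) * (g1*b1 + g2*b2) < 0" using ga gb by (simp add: mult_neg_pos)
  have e1: "p1*(g1*a1 + g2*a2) = g2*(p1*a2 - p2*a1)" "p1*(g1*b1 + g2*b2) = g2*(p1*b2 - p2*b1)"
    using g by (simp_all add: algebra_simps) (metis mult.commute mult_minus_left add_eq_0_iff2 mult.left_commute)+
  have e2: "p2*(g1*a1 + g2*a2) = -g1*(p1*a2 - p2*a1)" "p2*(g1*b1 + g2*b2) = -g1*(p1*b2 - p2*b1)"
    using g by (simp_all add: algebra_simps) (metis mult.commute mult_minus_left add_eq_0_iff2 mult.left_commute)+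
  show ?thesis
  proof (cases "p1 = 0")
    case False
    have "(p1*(g1*a1 + g2*a2)) * (p1*(g1*b1 + g2*b2)) = (p1*p1) * ((g1*a1 + g2*a2) * (g1*b1 + g2*b2))"
      by (simp add: algebra_simps)
    moreover have "(p1*p1) * ((g1*a1 + g2*a2) * (g1*b1 + g2*b2)) < 0"
      using neg False by (metis mult_pos_neg not_real_square_gt_zero)
    moreover have "(p1*(g1*a1 + g2*a2)) * (p1*(g1*b1 + g2*b2)) = (g2*g2) * ((p1*a2 - p2*a1) * (p1*b2 - p2*b1))"
      by (subst e1(1), subst e1(2)) (simp add: algebra_simps)
    ultimately have "(g2*g2) * ((p1*a2 - p2*a1) * (p1*b2 - p2*b1)) < 0"
      by simp
    then have "(p1*a2 - p2*a1) * (p1*b2 - p2*b1) < 0"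
      by (metis mult_less_0_iff not_square_less_zero)
    then show ?thesis by (simp add: algebra_simps)
  next
    case True
    then have p2: "p2 \<noteq> 0" using p by auto
    have "(p2*(g1*a1 + g2*a2)) * (p2*(g1*b1 + g2*b2)) = (p2*p2) * ((g1*a1 + g2*a2) * (g1*b1 + g2*b2))"
      by (simp add: algebra_simps)
    moreover have "(p2*p2) * ((g1*a1 + g2*a2) * (g1*b1 + g2*b2)) < 0"
      using neg p2 by (metis mult_pos_neg not_real_square_gt_zero)
    moreover have "(p2*(g1*a1 + g2*a2)) * (p2*(g1*b1 + g2*b2)) = (g1*g1) * ((p1*a2 - p2*a1) * (p1*b2 - p2*b1))"
      by (subst e2(1), subst e2(2)) (simp add: algebra_simps)
    ultimately have "(g1*g1) * ((p1*a2 - p2*a1) * (p1*b2 - p2*b1)) < 0"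
      by simp
    then have "(p1*a2 - p2*a1) * (p1*b2 - p2*b1) < 0"
      by (metis mult_less_0_iff not_square_less_zero)
    then show ?thesis by (simp add: algebra_simps)
  qed
qed

lemma prim_lem:
  fixes l :: real
  assumes "l > 0" "l \<in> \<int>" "1/l \<in> \<int>"
  shows "l = 1"
proof -
  obtain n where n: "l = of_int n" using assms(2) Ints_cases by blast
  obtain m where m: "1/l = of_int m" using assms(3) Ints_cases by blast
  have "n \<ge> 1" using n assms(1) by simp
  have "m \<ge> 1" using m assms(1) by (metis of_int_0_less_iff zero_less_divide_1_iff int_one_le_iff_zero_less)
  have "l * (1/l) = 1" using assms(1) by simp
  moreover have "real_of_int (n*m) = l * (1/l)" by (simp only: of_int_mult n[symmetric] m[symmetric])
  ultimately have "of_int (n*m) = (1::real)" by simp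
  then have "n*m = 1" by (metis of_int_eq_1_iff)
  then show ?thesis using n \<open>n\<ge>1\<close> \<open>m \<ge> 1\<close> by (metis int_one_le_iff_zero_less pos_zmult_eq_1_iff of_int_1)
qed

lemma int_prod_one:
  fixes x y :: real
  assumes "x \<in> \<int>" "y \<in> \<int>" "x*y = 1"
  shows "x = 1 \<or> x = -1"
proof -
  obtain n where n: "x = of_int n" using assms(1) Ints_cases by blast
  obtain m where m: "y = of_int m" using assms(2) Ints_cases by blast
  have "n*m = 1" using assms(3) n m by (metis of_int_eq_1_iff of_int_mult)
  then have "n = 1 \<or> n = -1" using zmult_eq_1_iff by blast
  then show ?thesis using n by auto
qed


lemma prim2:
  fixes s t p1 p2 q1 q2 r1 r2 k1 k2 :: real
  assumes st: "s > 0" "t > 0" and e: "s*p1 + t*q1 = 0" "s*p2 + t*q2 = 0"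
    and ints: "p1 \<in> \<int>" "p2 \<in> \<int>" "q1 \<in> \<int>" "q2 \<in> \<int>" "r1 \<in> \<int>" "r2 \<in> \<int>" "k1 \<in> \<int>" "k2 \<in> \<int>"
    and d1: "r1*q2 - r2*q1 = 1 \<or> r1*q2 - r2*q1 = -1"
    and d2: "p1*k2 - p2*k1 = 1 \<or> p1*k2 - p2*k1 = -1"
  shows "q1 = -p1 \<and> q2 = -p2"
proof -
  define l where "l = s/t"
  have l: "l > 0" using st by (simp add: l_def)
  have q: "q1 = -l*p1" "q2 = -l*p2" using e st unfolding l_def by (simp_all add: field_simps)
  have "r1*q2 - r2*q1 = -l*(r1*p2 - r2*p1)" using q by (simp add: algebra_simps)
  then have "l*(r1*p2 - r2*p1) = 1 \<or> l*(r1*p2 - r2*p1) = -1" using d1 by auto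
  then have "1/l = (r1*p2 - r2*p1) \<or> 1/l = -(r1*p2 - r2*p1)" using l by (auto simp: field_simps)
  moreover have "r1*p2 - r2*p1 \<in> \<int>" using ints by (intro Ints_diff Ints_mult) auto
  ultimately have il: "1/l \<in> \<int>" by (metis Ints_minus)
  have p: "p1 = -(1/l)*q1" "p2 = -(1/l)*q2" using q l by simp_all
  have "p1*k2 - p2*k1 = -(1/l)*(q1*k2 - q2*k1)" using p by (simp add: algebra_simps)
  then have "(1/l)*(q1*k2 - q2*k1) = 1 \<or> (1/l)*(q1*k2 - q2*k1) = -1" using d2 by auto
  then have "l = (q1*k2 - q2*k1) \<or> l = -(q1*k2 - q2*k1)" using l by (auto simp: field_simps)
  moreover have "q1*k2 - q2*k1 \<in> \<int>" using ints by (intro Ints_diff Ints_mult) auto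
  ultimately have "l \<in> \<int>" by (metis Ints_minus)
  then have "l = 1" using prim_lem l il by blast
  then show ?thesis using q by simp
qed

lemma det_lem:
  fixes p1 p2 q1 q2 c1 c2 d1 d2 :: real
  assumes "c1*p1 + c2*q1 = 1" "c1*p2 + c2*q2 = 0" "d1*p1 + d2*q1 = 0" "d1*p2 + d2*q2 = 1"
   "p1 \<in> \<int>" "p2 \<in> \<int>" "q1 \<in> \<int>" "q2 \<in> \<int>" "c1 \<in> \<int>" "c2 \<in> \<int>" "d1 \<in> \<int>" "d2 \<in> \<int>"
  shows "p1*q2 - p2*q1 = 1 \<or> p1*q2 - p2*q1 = -1"
proof -
  have "(p1*q2 - p2*q1)*(c1*d2 - c2*d1) = 1" using assms(1-4) by algebra
  moreover have "p1*q2 - p2*q1 \<in> \<int>" "c1*d2 - c2*d1 \<in> \<int>" using assms(5-12) by (intro Ints_diff Ints_mult; simp)+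
  ultimately show ?thesis using int_prod_one by blast
qed


lemma lin_modL:
  fixes h :: "real^'d \<Rightarrow> real"
  assumes "linear h" "\<forall>l\<in>L. h l = 0" "w - a *\<^sub>R e - b *\<^sub>R f \<in> L"
  shows "h w = a * h e + b * h f"
proof -
  have "h (w - a *\<^sub>R e - b *\<^sub>R f) = 0" using assms by blast
  then show ?thesis using assms(1) by (simp add: linear_diff linear_scale)
qed

lemma corner_det_vec:
  fixes L :: "(real^'d) set"
  assumes L: "subspace L"
    and indep: "\<And>a b. a *\<^sub>R e + b *\<^sub>R f \<in> L \<Longrightarrow> a = 0 \<and> b = 0"
    and cu: "u - p1 *\<^sub>R e - p2 *\<^sub>R f \<in> L" and cw: "w - q1 *\<^sub>R e - q2 *\<^sub>R f \<in> L"
    and lat: "\<And>z. integral_vec z \<Longrightarrow> \<exists>a\<in>\<int>. \<exists>b\<in>\<int>. z - a *\<^sub>R u - b *\<^sub>R w \<in> L"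
    and ie: "integral_vec e" and iff: "integral_vec f"
    and ints: "p1 \<in> \<int>" "p2 \<in> \<int>" "q1 \<in> \<int>" "q2 \<in> \<int>"
  shows "p1*q2 - p2*q1 = 1 \<or> p1*q2 - p2*q1 = -1"
proof -
  obtain c1 c2 where c: "c1 \<in> \<int>" "c2 \<in> \<int>" "e - c1 *\<^sub>R u - c2 *\<^sub>R w \<in> L" using lat[OF ie] by blast
  obtain d1 d2 where d: "d1 \<in> \<int>" "d2 \<in> \<int>" "f - d1 *\<^sub>R u - d2 *\<^sub>R w \<in> L" using lat[OF iff] by blast
  have "(1 - (c1*p1 + c2*q1)) *\<^sub>R e + (-(c1*p2 + c2*q2)) *\<^sub>R f
     = (e - c1 *\<^sub>R u - c2 *\<^sub>R w) + c1 *\<^sub>R (u - p1 *\<^sub>R e - p2 *\<^sub>R f) + c2 *\<^sub>R (w - q1 *\<^sub>R e - q2 *\<^sub>R f)"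
    by (simp add: algebra_simps)
  also have "\<dots> \<in> L" using L c cu cw by (intro subspace_add subspace_scale; simp)
  finally have e1: "c1*p1 + c2*q1 = 1" "c1*p2 + c2*q2 = 0" using indep by (fastforce, fastforce)
  have "(-(d1*p1 + d2*q1)) *\<^sub>R e + (1 - (d1*p2 + d2*q2)) *\<^sub>R f
     = (f - d1 *\<^sub>R u - d2 *\<^sub>R w) + d1 *\<^sub>R (u - p1 *\<^sub>R e - p2 *\<^sub>R f) + d2 *\<^sub>R (w - q1 *\<^sub>R e - q2 *\<^sub>R f)"
    by (simp add: algebra_simps)
  also have "\<dots> \<in> L" using L d cu cw by (intro subspace_add subspace_scale; simp)
  finally have e2: "d1*p1 + d2*q1 = 0" "d1*p2 + d2*q2 = 1" using indep by (fastforce, fastforce)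
  show ?thesis using det_lem[OF e1 e2 ints c(1,2) d(1,2)] .
qed

lemma adj_vec:
  fixes L :: "(real^'d) set"
  assumes L: "subspace L"
    and indep: "\<And>a b. a *\<^sub>R e + b *\<^sub>R f \<in> L \<Longrightarrow> a = 0 \<and> b = 0"
    and cu: "u - p1 *\<^sub>R e - p2 *\<^sub>R f \<in> L" and cw: "w - q1 *\<^sub>R e - q2 *\<^sub>R f \<in> L"
    and st: "s *\<^sub>R u + t *\<^sub>R w \<in> L"
  shows "s*p1 + t*q1 = 0 \<and> s*p2 + t*q2 = 0"
proof -
  have "(s*p1 + t*q1) *\<^sub>R e + (s*p2 + t*q2) *\<^sub>R f
     = (s *\<^sub>R u + t *\<^sub>R w) - s *\<^sub>R (u - p1 *\<^sub>R e - p2 *\<^sub>R f) - t *\<^sub>R (w - q1 *\<^sub>R e - q2 *\<^sub>R f)"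
    by (simp add: algebra_simps)
  also have "\<dots> \<in> L" using L st cu cw by (metis subspace_diff subspace_scale)
  finally show ?thesis using indep by blast
qed


lemma aux_eq0: "(w::real) = a*y + b*z \<Longrightarrow> w = 0 \<Longrightarrow> y*a + z*b = 0"
  by (simp add: mult.commute)
lemma aux_lt: "(w::real) = a*y + b*z \<Longrightarrow> w < 0 \<Longrightarrow> y*a + z*b < 0"
  by (simp add: mult.commute)
lemma aux_gt: "(w::real) = c*y + d*z \<Longrightarrow> c = -a \<and> d = -b \<Longrightarrow> w < 0 \<Longrightarrow> y*a + z*b > 0"
proof -
  assume h: "w = c*y + d*z" and cd: "c = -a \<and> d = -b" and z: "w < 0"
  have z2: "w = (-a)*y + (-b)*z" using h cd by blast
  have "(-a)*y + (-b)*z = -(y*a + z*b)" by (simp add: algebra_simps)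
  then have "w = -(y*a + z*b)" by (rule trans[OF z2])
  then show ?thesis using z by linarith
qed


lemma B2:
  fixes L :: "(real^'d) set" and ep1 em1 ep2 em2 ep3 em3 ep4 em4 :: "real^'d"
    and h1 h2 h3 h4 :: "real^'d \<Rightarrow> real"
  assumes L: "subspace L"
  and lat1: "\<And>z. integral_vec z \<Longrightarrow> \<exists>a\<in>\<int>. \<exists>b\<in>\<int>. z - a *\<^sub>R ep1 - b *\<^sub>R em1 \<in> L"
  and lat2: "\<And>z. integral_vec z \<Longrightarrow> \<exists>a\<in>\<int>. \<exists>b\<in>\<int>. z - a *\<^sub>R ep2 - b *\<^sub>R em2 \<in> L"
  and lat3: "\<And>z. integral_vec z \<Longrightarrow> \<exists>a\<in>\<int>. \<exists>b\<in>\<int>. z - a *\<^sub>R ep3 - b *\<^sub>R em3 \<in> L"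
  and lat4: "\<And>z. integral_vec z \<Longrightarrow> \<exists>a\<in>\<int>. \<exists>b\<in>\<int>. z - a *\<^sub>R ep4 - b *\<^sub>R em4 \<in> L"
  and ints: "integral_vec ep1" "integral_vec em1" "integral_vec ep2" "integral_vec em2"
     "integral_vec ep3" "integral_vec em3" "integral_vec ep4" "integral_vec em4"
  and adj12: "\<exists>s>0. \<exists>t>0. s *\<^sub>R ep1 + t *\<^sub>R em2 \<in> L"
  and adj23: "\<exists>s>0. \<exists>t>0. s *\<^sub>R ep2 + t *\<^sub>R em3 \<in> L"
  and adj34: "\<exists>s>0. \<exists>t>0. s *\<^sub>R ep3 + t *\<^sub>R em4 \<in> L"
  and adj41: "\<exists>s>0. \<exists>t>0. s *\<^sub>R ep4 + t *\<^sub>R em1 \<in> L"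
  and hlin: "linear h1" "linear h2" "linear h3" "linear h4"
  and hL: "\<forall>l\<in>L. h1 l = 0" "\<forall>l\<in>L. h2 l = 0" "\<forall>l\<in>L. h3 l = 0" "\<forall>l\<in>L. h4 l = 0"
  and f1: "h1 ep1 = 0" "h1 ep2 < 0" "h1 em1 < 0"
  and f2: "h2 ep2 = 0" "h2 ep3 < 0" "h2 em2 < 0"
  and f3: "h3 ep3 = 0" "h3 ep4 < 0" "h3 em3 < 0"
  and f4: "h4 ep4 = 0" "h4 ep1 < 0" "h4 em4 < 0"
  shows "ep1 + ep3 \<in> L \<or> ep2 + ep4 \<in> L"
proof -
  have indep: "a = 0 \<and> b = 0" if ab: "a *\<^sub>R ep1 + b *\<^sub>R em1 \<in> L" for a b
  proof -
    have "h1 (a *\<^sub>R ep1 + b *\<^sub>R em1) = 0" using ab hL by blast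
    then have "b * h1 em1 = 0" using hlin(1) f1 by (simp add: linear_add linear_scale)
    then have b: "b = 0" using f1 by simp
    have "h4 (a *\<^sub>R ep1 + b *\<^sub>R em1) = 0" using ab hL by blast
    then have "a * h4 ep1 = 0" using hlin(4) b by (simp add: linear_add linear_scale)
    then have "a = 0" using f4 by simp
    then show ?thesis using b by simp
  qed
  obtain a1 b1 where P1: "a1 \<in> \<int>" "b1 \<in> \<int>" "ep1 - a1 *\<^sub>R ep1 - b1 *\<^sub>R em1 \<in> L" using lat1[OF ints(1)] by blast
  obtain c1 d1 where Q1: "c1 \<in> \<int>" "d1 \<in> \<int>" "em1 - c1 *\<^sub>R ep1 - d1 *\<^sub>R em1 \<in> L" using lat1[OF ints(2)] by blast
  obtain a2 b2 where P2: "a2 \<in> \<int>" "b2 \<in> \<int>" "ep2 - a2 *\<^sub>R ep1 - b2 *\<^sub>R em1 \<in> L" using lat1[OF ints(3)] by blast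
  obtain c2 d2 where Q2: "c2 \<in> \<int>" "d2 \<in> \<int>" "em2 - c2 *\<^sub>R ep1 - d2 *\<^sub>R em1 \<in> L" using lat1[OF ints(4)] by blast
  obtain a3 b3 where P3: "a3 \<in> \<int>" "b3 \<in> \<int>" "ep3 - a3 *\<^sub>R ep1 - b3 *\<^sub>R em1 \<in> L" using lat1[OF ints(5)] by blast
  obtain c3 d3 where Q3: "c3 \<in> \<int>" "d3 \<in> \<int>" "em3 - c3 *\<^sub>R ep1 - d3 *\<^sub>R em1 \<in> L" using lat1[OF ints(6)] by blast
  obtain a4 b4 where P4: "a4 \<in> \<int>" "b4 \<in> \<int>" "ep4 - a4 *\<^sub>R ep1 - b4 *\<^sub>R em1 \<in> L" using lat1[OF ints(7)] by blast
  obtain c4 d4 where Q4: "c4 \<in> \<int>" "d4 \<in> \<int>" "em4 - c4 *\<^sub>R ep1 - d4 *\<^sub>R em1 \<in> L" using lat1[OF ints(8)] by blast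
  have D1: "a1*d1 - b1*c1 = 1 \<or> a1*d1 - b1*c1 = -1"
    by (rule corner_det_vec[OF L indep P1(3) Q1(3) lat1 ints(1,2) P1(1,2) Q1(1,2)])
  have D2: "a2*d2 - b2*c2 = 1 \<or> a2*d2 - b2*c2 = -1"
    by (rule corner_det_vec[OF L indep P2(3) Q2(3) lat2 ints(1,2) P2(1,2) Q2(1,2)])
  have D3: "a3*d3 - b3*c3 = 1 \<or> a3*d3 - b3*c3 = -1"
    by (rule corner_det_vec[OF L indep P3(3) Q3(3) lat3 ints(1,2) P3(1,2) Q3(1,2)])
  have D4: "a4*d4 - b4*c4 = 1 \<or> a4*d4 - b4*c4 = -1"
    by (rule corner_det_vec[OF L indep P4(3) Q4(3) lat4 ints(1,2) P4(1,2) Q4(1,2)])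
  have A12: "c2 = -a1 \<and> d2 = -b1"
  proof -
    obtain s t where st: "s > 0" "t > 0" "s *\<^sub>R ep1 + t *\<^sub>R em2 \<in> L" using adj12 by blast
    have "s*a1 + t*c2 = 0 \<and> s*b1 + t*d2 = 0" by (rule adj_vec[OF L indep P1(3) Q2(3) st(3)])
    then show ?thesis using prim2[OF st(1,2) _ _ P1(1,2) Q2(1,2) P2(1,2) Q1(1,2) D2 D1] by blast
  qed
  have A23: "c3 = -a2 \<and> d3 = -b2"
  proof -
    obtain s t where st: "s > 0" "t > 0" "s *\<^sub>R ep2 + t *\<^sub>R em3 \<in> L" using adj23 by blast
    have "s*a2 + t*c3 = 0 \<and> s*b2 + t*d3 = 0" by (rule adj_vec[OF L indep P2(3) Q3(3) st(3)])
    then show ?thesis using prim2[OF st(1,2) _ _ P2(1,2) Q3(1,2) P3(1,2) Q2(1,2) D3 D2] by blast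
  qed
  have A34: "c4 = -a3 \<and> d4 = -b3"
  proof -
    obtain s t where st: "s > 0" "t > 0" "s *\<^sub>R ep3 + t *\<^sub>R em4 \<in> L" using adj34 by blast
    have "s*a3 + t*c4 = 0 \<and> s*b3 + t*d4 = 0" by (rule adj_vec[OF L indep P3(3) Q4(3) st(3)])
    then show ?thesis using prim2[OF st(1,2) _ _ P3(1,2) Q4(1,2) P4(1,2) Q3(1,2) D4 D3] by blast
  qed
  have A41: "c1 = -a4 \<and> d1 = -b4"
  proof -
    obtain s t where st: "s > 0" "t > 0" "s *\<^sub>R ep4 + t *\<^sub>R em1 \<in> L" using adj41 by blast
    have "s*a4 + t*c1 = 0 \<and> s*b4 + t*d1 = 0" by (rule adj_vec[OF L indep P4(3) Q1(3) st(3)])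
    then show ?thesis using prim2[OF st(1,2) _ _ P4(1,2) Q1(1,2) P1(1,2) Q4(1,2) D1 D4] by blast
  qed
  define e1 where "e1 = a4*b1 - b4*a1"
  define e2 where "e2 = a1*b2 - b1*a2"
  define e3 where "e3 = a2*b3 - b2*a3"
  define e4 where "e4 = a3*b4 - b3*a4"
  have E1: "e1 = 1 \<or> e1 = -1" using D1 A41 unfolding e1_def by (simp add: algebra_simps)
  have E2: "e2 = 1 \<or> e2 = -1" using D2 A12 unfolding e2_def by (simp add: algebra_simps)
  have E3: "e3 = 1 \<or> e3 = -1" using D3 A23 unfolding e3_def by (simp add: algebra_simps)
  have E4: "e4 = 1 \<or> e4 = -1" using D4 A34 unfolding e4_def by (simp add: algebra_simps)
  have nz1: "a1 \<noteq> 0 \<or> b1 \<noteq> 0" using D1 by auto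
  have nz2: "a2 \<noteq> 0 \<or> b2 \<noteq> 0" using D2 by auto
  have nz3: "a3 \<noteq> 0 \<or> b3 \<noteq> 0" using D3 by auto
  have nz4: "a4 \<noteq> 0 \<or> b4 \<noteq> 0" using D4 by auto
  have S1: "e1 * e2 > 0"
  proof -
    have r1: "h1 ep1 = a1 * h1 ep1 + b1 * h1 em1" by (rule lin_modL[OF hlin(1) hL(1) P1(3)])
    have r2: "h1 ep2 = a2 * h1 ep1 + b2 * h1 em1" by (rule lin_modL[OF hlin(1) hL(1) P2(3)])
    have r3: "h1 em1 = c1 * h1 ep1 + d1 * h1 em1" by (rule lin_modL[OF hlin(1) hL(1) Q1(3)])
    have "h1 ep1 * a1 + h1 em1 * b1 = 0" "h1 ep1 * a2 + h1 em1 * b2 < 0"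
      "h1 ep1 * a4 + h1 em1 * b4 > 0"
      by (rule aux_eq0[OF r1 f1(1)], rule aux_lt[OF r2 f1(2)], rule aux_gt[OF r3 A41 f1(3)])
    from sign_lem[OF this nz1] show ?thesis unfolding e1_def e2_def .
  qed
  have S2: "e2 * e3 > 0"
  proof -
    have r1: "h2 ep2 = a2 * h2 ep1 + b2 * h2 em1" by (rule lin_modL[OF hlin(2) hL(2) P2(3)])
    have r2: "h2 ep3 = a3 * h2 ep1 + b3 * h2 em1" by (rule lin_modL[OF hlin(2) hL(2) P3(3)])
    have r3: "h2 em2 = c2 * h2 ep1 + d2 * h2 em1" by (rule lin_modL[OF hlin(2) hL(2) Q2(3)])
    have "h2 ep1 * a2 + h2 em1 * b2 = 0" "h2 ep1 * a3 + h2 em1 * b3 < 0"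
      "h2 ep1 * a1 + h2 em1 * b1 > 0"
      by (rule aux_eq0[OF r1 f2(1)], rule aux_lt[OF r2 f2(2)], rule aux_gt[OF r3 A12 f2(3)])
    from sign_lem[OF this nz2] show ?thesis unfolding e2_def e3_def .
  qed
  have S3: "e3 * e4 > 0"
  proof -
    have r1: "h3 ep3 = a3 * h3 ep1 + b3 * h3 em1" by (rule lin_modL[OF hlin(3) hL(3) P3(3)])
    have r2: "h3 ep4 = a4 * h3 ep1 + b4 * h3 em1" by (rule lin_modL[OF hlin(3) hL(3) P4(3)])
    have r3: "h3 em3 = c3 * h3 ep1 + d3 * h3 em1" by (rule lin_modL[OF hlin(3) hL(3) Q3(3)])
    have "h3 ep1 * a3 + h3 em1 * b3 = 0" "h3 ep1 * a4 + h3 em1 * b4 < 0"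
      "h3 ep1 * a2 + h3 em1 * b2 > 0"
      by (rule aux_eq0[OF r1 f3(1)], rule aux_lt[OF r2 f3(2)], rule aux_gt[OF r3 A23 f3(3)])
    from sign_lem[OF this nz3] show ?thesis unfolding e3_def e4_def .
  qed
  have ee2: "e2 = e1" using E1 E2 S1 by (elim disjE) simp_all
  have ee3: "e3 = e1" using ee2 E2 E3 S2 by (elim disjE) simp_all
  have ee4: "e4 = e1" using ee3 E3 E4 S3 by (elim disjE) simp_all
  have q1: "a4*b1 - b4*a1 = e1" unfolding e1_def ..
  have q2: "a1*b2 - b1*a2 = e1" using ee2 unfolding e2_def .
  have q3: "a2*b3 - b2*a3 = e1" using ee3 unfolding e3_def .
  have q4: "a3*b4 - b3*a4 = e1" using ee4 unfolding e4_def .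
  have "(a3 = -a1 \<and> b3 = -b1) \<or> (a4 = -a2 \<and> b4 = -b2)"
    by (rule final_alg[OF q1 q2 q3 q4 E1])
  then show ?thesis
  proof
    assume h: "a3 = -a1 \<and> b3 = -b1"
    have "ep1 + ep3 = (ep1 - a1 *\<^sub>R ep1 - b1 *\<^sub>R em1) + (ep3 - a3 *\<^sub>R ep1 - b3 *\<^sub>R em1)"
      using h by (simp add: algebra_simps)
    also have "\<dots> \<in> L" using L P1(3) P3(3) by (metis subspace_add)
    finally show ?thesis by simp
  next
    assume h: "a4 = -a2 \<and> b4 = -b2"
    have "ep2 + ep4 = (ep2 - a2 *\<^sub>R ep1 - b2 *\<^sub>R em1) + (ep4 - a4 *\<^sub>R ep1 - b4 *\<^sub>R em1)"
      using h by (simp add: algebra_simps)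
    also have "\<dots> \<in> L" using L P2(3) P4(3) by (metis subspace_add)
    finally show ?thesis by simp
  qed
qed


lemma unit_cube_UNIV: "unit_cube (UNIV::'d::finite set) = {v::real^'d. \<forall>i. 0 \<le> v$i \<and> v$i \<le> 1}"
  by (auto simp: unit_cube_def)

lemma cube_cbox: "unit_cube (UNIV::'d::finite set) = cbox (0::real^'d) (vec 1)"
  unfolding unit_cube_UNIV by (auto simp: mem_box_cart)

lemma cube_convex: "convex (unit_cube (UNIV::'d::finite set))"
  unfolding cube_cbox by (rule convex_box)

lemma cube_compact: "compact (unit_cube (UNIV::'d::finite set))"
  unfolding cube_cbox by (rule compact_cbox)

lemma cube_facet_face:
  assumes "c = 0 \<or> c = (1::real)"
  shows "(unit_cube UNIV \<inter> {z::real^'d. z$k = c}) face_of unit_cube UNIV"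
proof (cases "c = 0")
  case True
  have "(unit_cube UNIV \<inter> {z::real^'d. (- axis k 1) \<bullet> z = 0}) face_of unit_cube UNIV"
    by (rule face_of_Int_supporting_hyperplane_le[OF cube_convex])
       (auto simp: unit_cube_UNIV inner_axis inner_axis')
  moreover have "{z::real^'d. (- axis k 1) \<bullet> z = 0} = {z. z$k = c}"
    using True by (auto simp: inner_axis inner_axis')
  ultimately show ?thesis by simp
next
  case False
  then have c: "c = 1" using assms by simp
  have "(unit_cube UNIV \<inter> {z::real^'d. (axis k 1) \<bullet> z = 1}) face_of unit_cube UNIV"
    by (rule face_of_Int_supporting_hyperplane_le[OF cube_convex])
       (auto simp: unit_cube_UNIV inner_axis inner_axis')
  moreover have "{z::real^'d. (axis k 1) \<bullet> z = 1} = {z. z$k = c}"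
    using c by (auto simp: inner_axis inner_axis')
  ultimately show ?thesis by simp
qed

definition upd :: "real^'d \<Rightarrow> 'd \<Rightarrow> real \<Rightarrow> real^'d" where
  "upd m k t = (\<chi> j. if j = k then t else m$j)"

lemma upd_nth [simp]: "upd m k t $ j = (if j = k then t else m$j)"
  by (simp add: upd_def)

lemma upd_in_cube: "m \<in> unit_cube UNIV \<Longrightarrow> 0 \<le> t \<Longrightarrow> t \<le> 1 \<Longrightarrow> upd m k t \<in> unit_cube UNIV"
  by (auto simp: unit_cube_UNIV)

lemma upd_same [simp]: "upd m k (m$k) = m"
  by (simp add: upd_def vec_eq_iff)

lemma slide:
  assumes G: "G face_of unit_cube UNIV" and m: "m \<in> G" and mk: "0 < m$k" "m$k < 1"
    and t: "0 \<le> t" "t \<le> 1"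
  shows "upd m k t \<in> G"
proof -
  have mc: "m \<in> unit_cube UNIV" using G m face_of_imp_subset by blast
  consider "t = m$k" | "t < m$k" | "t > m$k" by linarith
  then show ?thesis
  proof cases
    case 1 then show ?thesis using m by simp
  next
    case 2
    define th where "th = (m$k - t) / (1 - t)"
    have t1: "t < 1" using 2 mk by simp
    have th: "0 < th" "th < 1" using 2 mk t1 by (auto simp: th_def field_simps)
    have "m = (1 - th) *\<^sub>R upd m k t + th *\<^sub>R upd m k 1"
    proof -
      have e: "th * (1 - t) = m$k - t" unfolding th_def using t1 by simp
      have "(1 - th) * t + th = t + th * (1 - t)" by (simp add: algebra_simps)
      then have "(1 - th) * t + th = m$k" using e by simp
      then show ?thesis by (simp add: vec_eq_iff algebra_simps)
    qed
    moreover have "upd m k t \<noteq> upd m k 1" using t1 by (metis upd_nth less_irrefl)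
    ultimately have "m \<in> open_segment (upd m k t) (upd m k 1)" using th by (auto simp: in_segment)
    moreover have "upd m k t \<in> unit_cube UNIV" "upd m k 1 \<in> unit_cube UNIV"
      using mc t by (auto intro: upd_in_cube)
    ultimately show ?thesis using G m unfolding face_of_def by blast
  next
    case 3
    define th where "th = (t - m$k) / t"
    have t0: "0 < t" using 3 mk by simp
    have th: "0 < th" "th < 1" using 3 mk t0 by (auto simp: th_def field_simps)
    have "m = (1 - th) *\<^sub>R upd m k t + th *\<^sub>R upd m k 0"
    proof -
      have "(1 - th) * t = m$k" using t0 by (simp add: th_def field_simps)
      then show ?thesis by (simp add: vec_eq_iff algebra_simps)
    qed
    moreover have "upd m k t \<noteq> upd m k 0" using t0 by (metis upd_nth less_irrefl)
    ultimately have "m \<in> open_segment (upd m k t) (upd m k 0)" using th by (auto simp: in_segment)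
    moreover have "upd m k t \<in> unit_cube UNIV" "upd m k 0 \<in> unit_cube UNIV"
      using mc t by (auto intro: upd_in_cube)
    ultimately show ?thesis using G m unfolding face_of_def by blast
  qed
qed

lemma cube_extreme_01:
  assumes "p extreme_point_of unit_cube (UNIV::'d::finite set)"
  shows "p$j = 0 \<or> p$j = 1"
proof (rule ccontr)
  assume h: "\<not> (p$j = 0 \<or> p$j = 1)"
  have pc: "p \<in> unit_cube UNIV" using assms extreme_point_of_def by blast
  then have "0 < p$j" "p$j < 1" using h by (auto simp: unit_cube_UNIV less_le)
  have "p = (1 - p$j) *\<^sub>R upd p j 0 + (p$j) *\<^sub>R upd p j 1"
    by (simp add: vec_eq_iff algebra_simps)
  moreover have "upd p j 0 \<noteq> upd p j 1" by (metis upd_nth zero_neq_one)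
  ultimately have "p \<in> open_segment (upd p j 0) (upd p j 1)"
    using \<open>0 < p$j\<close> \<open>p$j < 1\<close> by (auto simp: in_segment)
  moreover have "upd p j 0 \<in> unit_cube UNIV" "upd p j 1 \<in> unit_cube UNIV" using pc by (auto intro: upd_in_cube)
  ultimately show False using assms unfolding extreme_point_of_def by blast
qed


lemma edge_cube:
  fixes G :: "(real^'d) set"
  assumes G: "G face_of unit_cube UNIV" and p: "p \<in> G" and p01: "\<And>j. p$j = 0 \<or> p$j = 1"
    and q: "q \<in> G" "q \<noteq> p"
    and small: "\<And>H. H face_of unit_cube UNIV \<Longrightarrow> H \<subseteq> G \<Longrightarrow> H \<noteq> G \<Longrightarrow> H = {} \<or> (\<exists>r. H = {r})"
  shows "\<exists>k. G = {z \<in> unit_cube UNIV. \<forall>j. j \<noteq> k \<longrightarrow> z$j = p$j}"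
proof -
  obtain k where qk: "q$k \<noteq> p$k" using q(2) by (metis vec_eq_iff)
  have Gc: "G \<subseteq> unit_cube UNIV" using G face_of_imp_subset by blast
  have cG: "convex G" using G face_of_imp_convex by blast
  define H where "H = G \<inter> (unit_cube UNIV \<inter> {z. z$k = p$k})"
  have Hf: "H face_of unit_cube UNIV" unfolding H_def
    by (rule face_of_Int[OF G cube_facet_face]) (use p01 in auto)
  have "H \<noteq> G" using q qk unfolding H_def by blast
  moreover have "p \<in> H" using p Gc unfolding H_def by auto
  moreover have "H \<subseteq> G" unfolding H_def by blast
  ultimately have "H = {} \<or> (\<exists>r. H = {r})" using small[OF Hf] by blast
  then have Hp: "H = {p}" using \<open>p \<in> H\<close> by blast
  have in01: "0 < (a + b + c)/3 \<and> (a + b + c)/3 < 1"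
    if "a = 0 \<or> a = 1" "0 \<le> b" "b \<le> 1" "0 \<le> c" "c \<le> 1" "b \<noteq> a \<or> c \<noteq> a" for a b c :: real
  proof -
    have "(a = 0 \<and> (0 < b \<or> 0 < c)) \<or> (a = 1 \<and> (b < 1 \<or> c < 1))"
      using that by (auto simp: less_le)
    then show ?thesis using that(2-5) by auto
  qed
  have claim1: "z$j = p$j" if z: "z \<in> G" and j: "j \<noteq> k" for z j
  proof (rule ccontr)
    assume zj: "z$j \<noteq> p$j"
    define m1 where "m1 = (1/2) *\<^sub>R q + (1/2) *\<^sub>R z"
    have m1: "m1 \<in> G" unfolding m1_def by (rule convexD[OF cG q(1) z]) auto
    define m where "m = (1/3) *\<^sub>R p + (2/3) *\<^sub>R m1"
    have m: "m \<in> G" unfolding m_def by (rule convexD[OF cG p m1]) auto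
    have mi: "m$i = (p$i + q$i + z$i)/3" for i by (simp add: m_def m1_def)
    have qc: "0 \<le> q$i \<and> q$i \<le> 1" "0 \<le> z$i \<and> z$i \<le> 1" for i using Gc q z by (auto simp: unit_cube_UNIV)
    have mk: "0 < m$k \<and> m$k < 1" unfolding mi
      by (rule in01) (use p01 qc qk in blast)+
    have mj: "0 < m$j \<and> m$j < 1" unfolding mi
      by (rule in01) (use p01 qc zj in blast)+
    have "upd m k (p$k) \<in> G" by (rule slide[OF G m conjunct1[OF mk] conjunct2[OF mk]]) (use p01[of k] in auto)
    moreover have "upd m k (p$k) \<in> unit_cube UNIV" using Gc \<open>upd m k (p$k) \<in> G\<close> by blast
    ultimately have "upd m k (p$k) \<in> H" unfolding H_def by simp
    then have "upd m k (p$k) = p" using Hp by blast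
    then have "m$j = p$j" using j by (metis upd_nth)
    then show False using mj p01[of j] by auto
  qed
  have sub: "{z \<in> unit_cube UNIV. \<forall>j. j \<noteq> k \<longrightarrow> z$j = p$j} \<subseteq> G"
  proof
    fix z assume z: "z \<in> {z \<in> unit_cube UNIV. \<forall>j. j \<noteq> k \<longrightarrow> z$j = p$j}"
    define m where "m = (1/2) *\<^sub>R p + (1/2) *\<^sub>R q"
    have m: "m \<in> G" unfolding m_def by (rule convexD[OF cG p q(1)]) auto
    have qc: "0 \<le> q$k" "q$k \<le> 1" using Gc q by (auto simp: unit_cube_UNIV)
    have mk: "0 < m$k" "m$k < 1" using qc qk p01[of k] by (auto simp: m_def)
    have zc: "0 \<le> z$k" "z$k \<le> 1" using z by (auto simp: unit_cube_UNIV)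
    have "z = upd m k (z$k)" using z claim1[OF q(1)] by (auto simp: vec_eq_iff m_def)
    then show "z \<in> G" using slide[OF G m mk zc] by simp
  qed
  have "G \<subseteq> {z \<in> unit_cube UNIV. \<forall>j. j \<noteq> k \<longrightarrow> z$j = p$j}" using Gc claim1 by blast
  then show ?thesis using sub by blast
qed


context
  fixes C :: "(real^'d) set" and \<phi> :: "(real^'d) set \<Rightarrow> (real^'d) set"
  assumes iso: "face_poset_iso UNIV C \<phi>"
begin

lemma iso_bij: "bij_betw \<phi> {F. F face_of C} {G. G face_of unit_cube UNIV}"
  using iso unfolding face_poset_iso_def by blast

lemma iso_face: "F face_of C \<Longrightarrow> \<phi> F face_of unit_cube UNIV"
  using bij_betw_apply[OF iso_bij, of F] by simp

lemma iso_inv: "K face_of unit_cube UNIV \<Longrightarrow>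
   inv_into {F. F face_of C} \<phi> K face_of C \<and> \<phi> (inv_into {F. F face_of C} \<phi> K) = K"
proof -
  assume K: "K face_of unit_cube UNIV"
  have KK: "K \<in> \<phi> ` {F. F face_of C}" using bij_betw_imp_surj_on[OF iso_bij] K by simp
  show ?thesis using inv_into_into[OF KK] f_inv_into_f[OF KK] by simp
qed

lemma iso_mono: "F face_of C \<Longrightarrow> G face_of C \<Longrightarrow> (F \<subseteq> G \<longleftrightarrow> \<phi> F \<subseteq> \<phi> G)"
  using iso unfolding face_poset_iso_def by blast

lemma iso_inj: "F face_of C \<Longrightarrow> G face_of C \<Longrightarrow> \<phi> F = \<phi> G \<Longrightarrow> F = G"
proof -
  assume F: "F face_of C" and G: "G face_of C" and e: "\<phi> F = \<phi> G"
  have "F \<subseteq> G" using iso_mono[OF F G] e by simp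
  moreover have "G \<subseteq> F" using iso_mono[OF G F] e by simp
  ultimately show "F = G" by (rule subset_antisym)
qed

lemma iso_empty: "\<phi> {} = {}"
proof -
  obtain H where H: "H face_of C" "\<phi> H = {}" using iso_inv[OF empty_face_of] by blast
  have "\<phi> {} \<subseteq> \<phi> H" using iso_mono[OF empty_face_of H(1)] by blast
  then show ?thesis using H by blast
qed

lemma iso_nonempty: "F face_of C \<Longrightarrow> F \<noteq> {} \<Longrightarrow> \<phi> F \<noteq> {}"
proof
  assume F: "F face_of C" and ne: "F \<noteq> {}" and e: "\<phi> F = {}"
  then have "\<phi> F = \<phi> {}" using iso_empty by simp
  then have "F = {}" by (rule iso_inj[OF F empty_face_of])
  then show False using ne by simp
qed

lemma iso_Int: "F face_of C \<Longrightarrow> G face_of C \<Longrightarrow> \<phi> (F \<inter> G) = \<phi> F \<inter> \<phi> G"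
proof -
  assume F: "F face_of C" and G: "G face_of C"
  have FG: "(F \<inter> G) face_of C" by (rule face_of_Int[OF F G])
  have "\<phi> (F \<inter> G) \<subseteq> \<phi> F" "\<phi> (F \<inter> G) \<subseteq> \<phi> G"
    using iso_mono[OF FG F] iso_mono[OF FG G] by blast+
  moreover
  have K: "(\<phi> F \<inter> \<phi> G) face_of unit_cube UNIV" by (rule face_of_Int[OF iso_face[OF F] iso_face[OF G]])
  obtain H where H: "H face_of C" "\<phi> H = \<phi> F \<inter> \<phi> G" using iso_inv[OF K] by blast
  have "H \<subseteq> F" "H \<subseteq> G" using iso_mono[OF H(1) F] iso_mono[OF H(1) G] H(2) by blast+
  then have "\<phi> H \<subseteq> \<phi> (F \<inter> G)" using iso_mono[OF H(1) FG] by blast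
  ultimately show ?thesis using H(2) by blast
qed

lemma iso_disjoint: "F face_of C \<Longrightarrow> G face_of C \<Longrightarrow> \<phi> F \<inter> \<phi> G = {} \<Longrightarrow> F \<inter> G = {}"
proof -
  assume F: "F face_of C" and G: "G face_of C" and d: "\<phi> F \<inter> \<phi> G = {}"
  have "\<phi> (F \<inter> G) = {}" using iso_Int[OF F G] d by simp
  then show "F \<inter> G = {}" using iso_nonempty[OF face_of_Int[OF F G]] by blast
qed

lemma iso_singleton:
  assumes w: "w extreme_point_of C"
  shows "\<exists>r. \<phi> {w} = {r}"
proof -
  have W: "{w} face_of C" using w face_of_singleton by blast
  have ne: "\<phi> {w} \<noteq> {}" using iso_nonempty[OF W] by simp
  have Wf: "\<phi> {w} face_of unit_cube UNIV" using iso_face[OF W] .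
  have "compact (\<phi> {w})" using face_of_imp_compact[OF cube_convex cube_compact Wf] .
  moreover have "convex (\<phi> {w})" using face_of_imp_convex[OF Wf] .
  ultimately obtain e where e: "e extreme_point_of \<phi> {w}" using extreme_point_exists_convex ne by blast
  have ef: "{e} face_of unit_cube UNIV"
    using face_of_trans[OF iffD2[OF face_of_singleton e] Wf] .
  have eW: "e \<in> \<phi> {w}" using e extreme_point_of_def by blast
  obtain H where H: "H face_of C" "\<phi> H = {e}" using iso_inv[OF ef] by blast
  have "H \<subseteq> {w}" using iso_mono[OF H(1) W] H(2) eW by simp
  then have "H = {} \<or> H = {w}" by blast
  moreover have "H \<noteq> {}" using H(2) iso_empty by auto
  ultimately have "H = {w}" by blast
  then show ?thesis using H(2) by blast
qed

lemma iso_edge: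
  assumes C: "convex C" and v: "v extreme_point_of C" and p: "\<phi> {v} = {p}" and E: "E \<in> edges_at C v"
  shows "\<phi> E face_of unit_cube UNIV" "p \<in> \<phi> E" "\<exists>q\<in>\<phi> E. q \<noteq> p"
    "\<And>H. H face_of unit_cube UNIV \<Longrightarrow> H \<subseteq> \<phi> E \<Longrightarrow> H \<noteq> \<phi> E \<Longrightarrow> H = {} \<or> (\<exists>r. H = {r})"
proof -
  have Ef: "E face_of C" and Ed: "aff_dim E = 1" and vE: "v \<in> E" using E unfolding edges_at_def by auto
  have V: "{v} face_of C" using v face_of_singleton by blast
  show "\<phi> E face_of unit_cube UNIV" by (rule iso_face[OF Ef])
  have sub: "\<phi> {v} \<subseteq> \<phi> E" using iso_mono[OF V Ef] vE by blast
  then show "p \<in> \<phi> E" using p by blast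
  have "E \<noteq> {v}" using Ed by auto
  then have "\<phi> E \<noteq> \<phi> {v}" using iso_inj[OF Ef V] by blast
  then show "\<exists>q\<in>\<phi> E. q \<noteq> p" using sub p by blast
  fix H assume H: "H face_of unit_cube UNIV" "H \<subseteq> \<phi> E" "H \<noteq> \<phi> E"
  obtain H0 where H0: "H0 face_of C" "\<phi> H0 = H" using iso_inv[OF H(1)] by blast
  have "H0 \<subseteq> E" using iso_mono[OF H0(1) Ef] H0(2) H(2) by blast
  moreover have "H0 \<noteq> E" using H0(2) H(3) by blast
  ultimately have "aff_dim H0 < aff_dim E"
    using face_of_aff_dim_lt[OF face_of_imp_convex[OF Ef]] face_of_face[OF Ef] H0(1) by blast
  then have "aff_dim H0 \<le> 0" using Ed by simp
  then have "aff_dim H0 = -1 \<or> aff_dim H0 = 0" using aff_dim_geq[of H0] by linarith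
  then have "H0 = {} \<or> (\<exists>w. H0 = {w})" using aff_dim_eq_0[of H0] aff_dim_empty[of H0] by auto
  then show "H = {} \<or> (\<exists>r. H = {r})"
  proof
    assume "H0 = {}" then show ?thesis using H0(2) iso_empty by simp
  next
    assume "\<exists>w. H0 = {w}"
    then obtain w where w: "H0 = {w}" by blast
    then have "w extreme_point_of C" using H0(1) face_of_singleton by blast
    then show ?thesis using iso_singleton H0(2) w by blast
  qed
qed

lemma edge_shape:
  assumes C: "convex C" and v: "v extreme_point_of C" and p: "\<phi> {v} = {p}" and E: "E \<in> edges_at C v"
  shows "\<exists>k. \<phi> E = {z \<in> unit_cube UNIV. \<forall>j. j \<noteq> k \<longrightarrow> z$j = p$j}"
proof -
  have V: "{v} face_of C" using v face_of_singleton by blast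
  have "{p} face_of unit_cube UNIV" using iso_face[OF V] p by simp
  then have pe: "p extreme_point_of unit_cube UNIV" using face_of_singleton by blast
  obtain q where q: "q \<in> \<phi> E" "q \<noteq> p" using iso_edge(3)[OF C v p E] by blast
  show ?thesis
    by (rule edge_cube[OF iso_edge(1)[OF C v p E] iso_edge(2)[OF C v p E] cube_extreme_01[OF pe] q
          iso_edge(4)[OF C v p E]])
qed

end


lemma ray_lemma:
  fixes E C :: "(real^'d) set"
  assumes v: "v extreme_point_of C" and EC: "E \<subseteq> C" and col: "collinear E" and vE: "v \<in> E"
   and t: "t > 0" "v + t *\<^sub>R u \<in> E" and u: "u \<noteq> 0" and w: "w \<in> E" "w \<noteq> v"
  shows "\<exists>s>0. w = v + s *\<^sub>R u"
proof -
  obtain d where d: "\<forall>x\<in>E. \<forall>y\<in>E. \<exists>c. x - y = c *\<^sub>R d" using col unfolding collinear_def by blast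
  obtain c1 where c1: "(v + t *\<^sub>R u) - v = c1 *\<^sub>R d" using d t(2) vE by blast
  obtain c2 where c2: "w - v = c2 *\<^sub>R d" using d w(1) vE by blast
  have tu: "t *\<^sub>R u = c1 *\<^sub>R d" using c1 by simp
  have c1nz: "c1 \<noteq> 0" using tu t u by auto
  define s where "s = c2 * t / c1"
  have ws: "w = v + s *\<^sub>R u"
  proof -
    have "s *\<^sub>R u = (c2 / c1) *\<^sub>R (t *\<^sub>R u)" by (simp add: s_def field_simps)
    also have "\<dots> = c2 *\<^sub>R d" using tu c1nz by simp
    finally show ?thesis using c2 by (metis add.commute diff_add_cancel)
  qed
  have snz: "s \<noteq> 0" using ws w(2) by auto
  have "\<not> s < 0"
  proof
    assume sneg: "s < 0"
    define th where "th = -s / (t - s)"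
    have th: "0 < th" "th < 1" using sneg t by (auto simp: th_def field_simps)
    have e0: "(1 - th) * s + th * t = 0" using sneg t by (simp add: th_def field_simps)
    have "(1 - th) *\<^sub>R w + th *\<^sub>R (v + t *\<^sub>R u) = v + ((1 - th) * s + th * t) *\<^sub>R u"
      unfolding ws by (simp add: algebra_simps)
    then have eqv: "v = (1 - th) *\<^sub>R w + th *\<^sub>R (v + t *\<^sub>R u)" using e0 by simp
    have "w \<noteq> v + t *\<^sub>R u"
    proof
      assume "w = v + t *\<^sub>R u"
      then have "s *\<^sub>R u = t *\<^sub>R u" using ws by simp
      then have "s = t" using u by simp
      then show False using sneg t by simp
    qed
    then have "v \<in> open_segment w (v + t *\<^sub>R u)" using eqv th by (auto simp: in_segment)
    moreover have "w \<in> C" "v + t *\<^sub>R u \<in> C" using EC w t by auto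
    ultimately show False using v unfolding extreme_point_of_def by blast
  qed
  then have "s > 0" using snz by linarith
  then show ?thesis using ws by blast
qed

definition Kset :: "'d::finite \<Rightarrow> 'd \<Rightarrow> real \<Rightarrow> real \<Rightarrow> (real^'d) set" where
  "Kset a b al be = {z \<in> unit_cube UNIV. z$a = al \<and> z$b = be}"

lemma Kset_face:
  assumes "al = 0 \<or> al = 1" "be = 0 \<or> be = 1"
  shows "Kset a b al be face_of unit_cube UNIV"
proof -
  have "Kset a b al be = (unit_cube UNIV \<inter> {z. z$a = al}) \<inter> (unit_cube UNIV \<inter> {z. z$b = be})"
    by (auto simp: Kset_def)
  then show ?thesis using face_of_Int[OF cube_facet_face cube_facet_face] assms by metis
qed

lemma Kset_swap: "Kset a b al be = Kset b a be al"
  by (auto simp: Kset_def)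


lemma Kset_01: "al = 0 \<or> al = 1 \<Longrightarrow> 1 - al = 0 \<or> 1 - al = (1::real)"
  by auto

lemma flip_meet:
  assumes iso: "face_poset_iso UNIV C \<phi>" and C: "convex C" and ab: "a \<noteq> b"
    and al: "al = 0 \<or> al = 1" and be: "be = 0 \<or> be = 1"
    and v: "v extreme_point_of C" and vF: "v \<in> inv_into {F. F face_of C} \<phi> (Kset a b al be)"
    and p: "\<phi> {v} = {p}"
    and E: "E \<in> edges_at C v" and Eshape: "\<phi> E = {z \<in> unit_cube UNIV. \<forall>j. j \<noteq> a \<longrightarrow> z$j = p$j}"
    and t: "t > 0" "v + t *\<^sub>R u \<in> E" and u: "u \<noteq> 0"
  shows "\<exists>s>0. v + s *\<^sub>R u \<in> E \<inter> inv_into {F. F face_of C} \<phi> (Kset a b (1-al) be)"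
proof -
  define Fc where "Fc = inv_into {F. F face_of C} \<phi> (Kset a b al be)"
  define Fa where "Fa = inv_into {F. F face_of C} \<phi> (Kset a b (1-al) be)"
  have Fc: "Fc face_of C" "\<phi> Fc = Kset a b al be"
    using iso_inv[OF iso Kset_face[OF al be]] unfolding Fc_def by auto
  have Fa: "Fa face_of C" "\<phi> Fa = Kset a b (1-al) be"
    using iso_inv[OF iso Kset_face[OF Kset_01[OF al] be]] unfolding Fa_def by auto
  have Ef: "E face_of C" and Ed: "aff_dim E = 1" and vE: "v \<in> E" using E unfolding edges_at_def by auto
  have V: "{v} face_of C" using v face_of_singleton by blast
  have vFc: "v \<in> Fc" using vF by (simp add: Fc_def)
  have "\<phi> {v} \<subseteq> \<phi> Fc" using iso_mono[OF iso V Fc(1)] vFc by simp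
  then have pK: "p \<in> Kset a b al be" using p Fc(2) by simp
  then have pc: "p \<in> unit_cube UNIV" "p$a = al" "p$b = be" by (auto simp: Kset_def)
  define q where "q = upd p a (1 - al)"
  have qc: "q \<in> unit_cube UNIV" unfolding q_def by (rule upd_in_cube[OF pc(1)]) (use al in auto)
  have "q \<in> \<phi> E" unfolding Eshape using qc by (simp add: q_def)
  moreover have "q \<in> \<phi> Fa" unfolding Fa(2) Kset_def using qc pc(3) ab ab[symmetric] by (simp add: q_def)
  ultimately have "\<phi> (E \<inter> Fa) \<noteq> {}" using iso_Int[OF iso Ef Fa(1)] by auto
  then have "E \<inter> Fa \<noteq> {}" using iso_empty[OF iso] by auto
  then obtain w where w: "w \<in> E" "w \<in> Fa" by blast
  have alne: "al \<noteq> 1 - al" using al by auto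
  have "\<phi> Fc \<inter> \<phi> Fa = {}"
  proof (rule ccontr)
    assume "\<phi> Fc \<inter> \<phi> Fa \<noteq> {}"
    then obtain z where "z \<in> Kset a b al be" "z \<in> Kset a b (1-al) be" using Fc(2) Fa(2) by auto
    then have "z$a = al" "z$a = 1 - al" unfolding Kset_def by auto
    then show False using alne by simp
  qed
  then have dj: "Fc \<inter> Fa = {}" by (rule iso_disjoint[OF iso Fc(1) Fa(1)])
  have wv: "w \<noteq> v"
  proof
    assume "w = v"
    then have "v \<in> Fc \<inter> Fa" using w(2) vFc by simp
    then show False using dj by simp
  qed
  have EC: "E \<subseteq> C" by (rule face_of_imp_subset[OF Ef])
  have col: "collinear E" by (simp add: collinear_aff_dim Ed)
  obtain s where s: "s > 0" "w = v + s *\<^sub>R u" using ray_lemma[OF v EC col vE t u w(1) wv] by blast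
  then have "v + s *\<^sub>R u \<in> E \<inter> Fa" using w by simp
  then have "v + s *\<^sub>R u \<in> E \<inter> inv_into {F. F face_of C} \<phi> (Kset a b (1-al) be)"
    by (simp add: Fa_def)
  then show ?thesis using s(1) by blast
qed


lemma p_in_K:
  assumes iso: "face_poset_iso UNIV C \<phi>" and al: "al = 0 \<or> al = 1" and be: "be = 0 \<or> be = 1"
    and v: "v extreme_point_of C" and vF: "v \<in> inv_into {F. F face_of C} \<phi> (Kset a b al be)"
    and p: "\<phi> {v} = {p}"
  shows "p \<in> Kset a b al be"
proof -
  define Fc where "Fc = inv_into {F. F face_of C} \<phi> (Kset a b al be)"
  have Fc: "Fc face_of C" "\<phi> Fc = Kset a b al be"
    using iso_inv[OF iso Kset_face[OF al be]] unfolding Fc_def by auto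
  have V: "{v} face_of C" using v face_of_singleton by blast
  have vFc: "v \<in> Fc" using vF by (simp add: Fc_def)
  have "\<phi> {v} \<subseteq> \<phi> Fc" using iso_mono[OF iso V Fc(1)] vFc by simp
  then show ?thesis using p Fc(2) by simp
qed

lemma corner_tri:
  assumes iso: "face_poset_iso UNIV C \<phi>" and C: "convex C" and ab: "a \<noteq> b"
    and al: "al = 0 \<or> al = 1" and be: "be = 0 \<or> be = 1"
    and v: "v extreme_point_of C" and vF: "v \<in> inv_into {F. F face_of C} \<phi> (Kset a b al be)"
    and u: "u \<in> prim_edge_dirs C v"
  shows "(\<exists>t>0. v + t *\<^sub>R u \<in> inv_into {F. F face_of C} \<phi> (Kset a b al be))
    \<or> (\<exists>E\<in>edges_at C v. \<exists>s>0. v + s *\<^sub>R u \<in> E \<inter> inv_into {F. F face_of C} \<phi> (Kset a b (1-al) be))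
    \<or> (\<exists>E\<in>edges_at C v. \<exists>s>0. v + s *\<^sub>R u \<in> E \<inter> inv_into {F. F face_of C} \<phi> (Kset a b al (1-be)))"
proof -
  obtain E t where E: "E \<in> edges_at C v" and t: "t > 0" "v + t *\<^sub>R u \<in> E" and u0: "u \<noteq> 0"
    using u unfolding prim_edge_dirs_def by blast
  obtain p where p: "\<phi> {v} = {p}" using iso_singleton[OF iso v] by blast
  have pK: "p \<in> Kset a b al be" by (rule p_in_K[OF iso al be v vF p])
  obtain k where k: "\<phi> E = {z \<in> unit_cube UNIV. \<forall>j. j \<noteq> k \<longrightarrow> z$j = p$j}"
    using edge_shape[OF iso C v p E] by blast
  consider "k = a" | "k = b" | "k \<noteq> a \<and> k \<noteq> b" by blast
  then show ?thesis
  proof cases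
    case 1
    have "\<exists>s>0. v + s *\<^sub>R u \<in> E \<inter> inv_into {F. F face_of C} \<phi> (Kset a b (1-al) be)"
      by (rule flip_meet[OF iso C ab al be v vF p E _ t u0]) (use k 1 in simp)
    then show ?thesis using E by blast
  next
    case 2
    have vF': "v \<in> inv_into {F. F face_of C} \<phi> (Kset b a be al)" using vF Kset_swap by metis
    have "\<exists>s>0. v + s *\<^sub>R u \<in> E \<inter> inv_into {F. F face_of C} \<phi> (Kset b a (1-be) al)"
      by (rule flip_meet[OF iso C ab[symmetric] be al v vF' p E _ t u0]) (use k 2 in simp)
    then have "\<exists>s>0. v + s *\<^sub>R u \<in> E \<inter> inv_into {F. F face_of C} \<phi> (Kset a b al (1-be))"
      using Kset_swap by metis
    then show ?thesis using E by blast
  next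
    case 3
    define Fc where "Fc = inv_into {F. F face_of C} \<phi> (Kset a b al be)"
    have Fc: "Fc face_of C" "\<phi> Fc = Kset a b al be"
      using iso_inv[OF iso Kset_face[OF al be]] unfolding Fc_def by auto
    have Ef: "E face_of C" using E unfolding edges_at_def by auto
    have "\<phi> E \<subseteq> Kset a b al be"
    proof
      fix z assume "z \<in> \<phi> E"
      then have z: "z \<in> unit_cube UNIV" "\<forall>j. j \<noteq> k \<longrightarrow> z$j = p$j" using k by auto
      have "z$a = p$a" "z$b = p$b" using z(2) 3 by metis+
      then show "z \<in> Kset a b al be" using pK z(1) by (simp add: Kset_def)
    qed
    then have "E \<subseteq> Fc" using iso_mono[OF iso Ef Fc(1)] Fc(2) by simp
    then have "v + t *\<^sub>R u \<in> inv_into {F. F face_of C} \<phi> (Kset a b al be)" using t(2) Fc_def by auto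
    then show ?thesis using t(1) by blast
  qed
qed


lemma corner_uniq:
  assumes iso: "face_poset_iso UNIV C \<phi>" and C: "convex C" and ab: "a \<noteq> b"
    and al: "al = 0 \<or> al = 1" and be: "be = 0 \<or> be = 1"
    and v: "v extreme_point_of C" and vF: "v \<in> inv_into {F. F face_of C} \<phi> (Kset a b al be)"
    and ind: "independent (prim_edge_dirs C v)"
    and u: "u \<in> prim_edge_dirs C v" and u': "u' \<in> prim_edge_dirs C v"
    and E: "E \<in> edges_at C v" "s > 0" "v + s *\<^sub>R u \<in> E \<inter> inv_into {F. F face_of C} \<phi> (Kset a b (1-al) be)"
    and E': "E' \<in> edges_at C v" "s' > 0" "v + s' *\<^sub>R u' \<in> E' \<inter> inv_into {F. F face_of C} \<phi> (Kset a b (1-al) be)"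
  shows "u = u'"
proof -
  obtain p where p: "\<phi> {v} = {p}" using iso_singleton[OF iso v] by blast
  have pK: "p \<in> Kset a b al be" by (rule p_in_K[OF iso al be v vF p])
  define Fa where "Fa = inv_into {F. F face_of C} \<phi> (Kset a b (1-al) be)"
  have Fa: "Fa face_of C" "\<phi> Fa = Kset a b (1-al) be"
    using iso_inv[OF iso Kset_face[OF Kset_01[OF al] be]] unfolding Fa_def by auto
  have alne: "al \<noteq> 1 - al" using al by auto
  have shape: "\<phi> X = {z \<in> unit_cube UNIV. \<forall>j. j \<noteq> a \<longrightarrow> z$j = p$j}"
    if X: "X \<in> edges_at C v" and w: "w \<in> X \<inter> Fa" for X w
  proof -
    obtain k where k: "\<phi> X = {z \<in> unit_cube UNIV. \<forall>j. j \<noteq> k \<longrightarrow> z$j = p$j}"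
      using edge_shape[OF iso C v p X] by blast
    have Xf: "X face_of C" using X unfolding edges_at_def by auto
    have "X \<inter> Fa \<noteq> {}" using w by blast
    then have "\<phi> (X \<inter> Fa) \<noteq> {}" using iso_nonempty[OF iso face_of_Int[OF Xf Fa(1)]] by blast
    then obtain z where z: "z \<in> \<phi> X" "z \<in> \<phi> Fa" using iso_Int[OF iso Xf Fa(1)] by blast
    have "k = a"
    proof (rule ccontr)
      assume "k \<noteq> a"
      then have "z$a = p$a" using z(1) k by auto
      moreover have "z$a = 1 - al" using z(2) Fa(2) by (simp add: Kset_def)
      moreover have "p$a = al" using pK by (simp add: Kset_def)
      ultimately show False using alne by simp
    qed
    then show ?thesis using k by simp
  qed
  have EFa: "v + s *\<^sub>R u \<in> E \<inter> Fa" using E(3) by (simp add: Fa_def)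
  have EFa': "v + s' *\<^sub>R u' \<in> E' \<inter> Fa" using E'(3) by (simp add: Fa_def)
  have Ef: "E face_of C" using E(1) unfolding edges_at_def by auto
  have Ef': "E' face_of C" using E'(1) unfolding edges_at_def by auto
  have "\<phi> E = \<phi> E'" using shape[OF E(1) EFa] shape[OF E'(1) EFa'] by simp
  then have EE: "E = E'" by (rule iso_inj[OF iso Ef Ef'])
  have Ed: "aff_dim E = 1" and vE: "v \<in> E" using E(1) unfolding edges_at_def by auto
  have col: "collinear E" by (simp add: collinear_aff_dim Ed)
  obtain d where d: "\<forall>x\<in>E. \<forall>y\<in>E. \<exists>c. x - y = c *\<^sub>R d" using col unfolding collinear_def by blast
  have p1: "v + s *\<^sub>R u \<in> E" using EFa by blast
  have p2: "v + s' *\<^sub>R u' \<in> E" using EFa' EE by blast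
  obtain c1 where c1: "(v + s *\<^sub>R u) - v = c1 *\<^sub>R d" using d p1 vE by blast
  obtain c2 where c2: "(v + s' *\<^sub>R u') - v = c2 *\<^sub>R d" using d p2 vE by blast
  have u0: "u \<noteq> 0" using u unfolding prim_edge_dirs_def by blast
  have su: "s *\<^sub>R u = c1 *\<^sub>R d" using c1 by simp
  have su': "s' *\<^sub>R u' = c2 *\<^sub>R d" using c2 by simp
  have c1nz: "c1 \<noteq> 0" using su E(2) u0 by auto
  have "u' = (c2 * s / (c1 * s')) *\<^sub>R u"
  proof -
    have "(c2 * s / (c1 * s')) *\<^sub>R u = (c2 / (c1 * s')) *\<^sub>R (s *\<^sub>R u)"
      using E(2) by (simp add: field_simps)
    also have "\<dots> = (c2 / s') *\<^sub>R d" using su c1nz by simp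
    also have "\<dots> = (1 / s') *\<^sub>R (s' *\<^sub>R u')" using su' by simp
    also have "\<dots> = u'" using E'(2) by simp
    finally show ?thesis by simp
  qed
  show "u = u'"
  proof (rule ccontr)
    assume ne: "u \<noteq> u'"
    have "u \<in> prim_edge_dirs C v - {u'}" using u ne by blast
    then have "(c2 * s / (c1 * s')) *\<^sub>R u \<in> span (prim_edge_dirs C v - {u'})"
      by (intro span_scale span_base)
    then have "u' \<in> span (prim_edge_dirs C v - {u'})" using \<open>u' = _\<close> by simp
    then have "dependent (prim_edge_dirs C v)" unfolding dependent_def using u' by blast
    then show False using ind by simp
  qed
qed


lemma lattice_span_UNIV:
  fixes B :: "(real^'d) set"
  assumes lb: "lattice_basis UNIV B"
  shows "span B = UNIV"
proof -
  have "Basis \<subseteq> span B"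
  proof
    fix x :: "real^'d" assume "x \<in> Basis"
    then obtain i where x: "x = axis i 1" unfolding Basis_vec_def by auto
    have "integral_vec x" unfolding integral_vec_def x by (auto simp: axis_def)
    moreover have "x \<in> coord_space UNIV" by (simp add: coord_space_def)
    ultimately obtain c where c: "x = (\<Sum>b\<in>B. c b *\<^sub>R b)" using lb unfolding lattice_basis_def by blast
    show "x \<in> span B" unfolding c by (intro span_sum span_scale span_base)
  qed
  then have "span Basis \<subseteq> span B" by (metis span_mono span_span)
  then show ?thesis by auto
qed

lemma decomp_two:
  fixes B L :: "(real^'d) set"
  assumes L: "subspace L" and fin: "finite B" and ep: "ep \<in> B" and em: "em \<in> B" and ne: "ep \<noteq> em"
    and rest: "\<And>u. u \<in> B \<Longrightarrow> u \<noteq> ep \<Longrightarrow> u \<noteq> em \<Longrightarrow> u \<in> L"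
  shows "(\<Sum>b\<in>B. c b *\<^sub>R b) - c ep *\<^sub>R ep - c em *\<^sub>R em \<in> L"
proof -
  have "(\<Sum>b\<in>B. c b *\<^sub>R b) = c ep *\<^sub>R ep + (\<Sum>b\<in>B - {ep}. c b *\<^sub>R b)"
    using sum.remove[OF fin ep] by simp
  also have "(\<Sum>b\<in>B - {ep}. c b *\<^sub>R b) = c em *\<^sub>R em + (\<Sum>b\<in>B - {ep} - {em}. c b *\<^sub>R b)"
    using sum.remove[of "B - {ep}" em] fin em ne by simp
  finally have eq: "(\<Sum>b\<in>B. c b *\<^sub>R b) - c ep *\<^sub>R ep - c em *\<^sub>R em = (\<Sum>b\<in>B - {ep} - {em}. c b *\<^sub>R b)"
    by simp
  have "(\<Sum>b\<in>B - {ep} - {em}. c b *\<^sub>R b) \<in> L"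
    by (rule subspace_sum[OF L]) (use rest L in \<open>auto intro: subspace_scale\<close>)
  then show ?thesis using eq by simp
qed

lemma corner_data:
  fixes L B :: "(real^'d) set" and v :: "real^'d" and hn hp :: "real^'d \<Rightarrow> real"
  assumes L: "subspace L" and lb: "lattice_basis UNIV B"
   and part: "\<And>u. u \<in> B \<Longrightarrow> u \<in> L \<or> u \<in> Pn \<or> u \<in> Pp"
   and Pn: "\<And>u u'. u \<in> Pn \<Longrightarrow> u' \<in> Pn \<Longrightarrow> u = u'"
   and Pp: "\<And>u u'. u \<in> Pp \<Longrightarrow> u' \<in> Pp \<Longrightarrow> u = u'"
   and PnB: "Pn \<subseteq> B" and PpB: "Pp \<subseteq> B"
   and Pn_ray: "\<And>u. u \<in> Pn \<Longrightarrow> \<exists>s>0. v + s *\<^sub>R u \<in> Fn"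
   and Pp_ray: "\<And>u. u \<in> Pp \<Longrightarrow> \<exists>t>0. v + t *\<^sub>R u \<in> Fp"
   and hn: "linear hn" "\<forall>l\<in>L. hn l = 0" "\<forall>z\<in>Fn. hn z = hn v" "\<forall>z\<in>Fp. hn z < hn v"
   and hp: "linear hp" "\<forall>l\<in>L. hp l = 0" "\<forall>z\<in>Fp. hp z = hp v" "\<forall>z\<in>Fn. hp z < hp v"
   and ne: "Fn \<noteq> {}" "Fp \<noteq> {}"
  shows "\<exists>ep em. ep \<in> B \<and> em \<in> B \<and> (\<exists>s>0. v + s *\<^sub>R ep \<in> Fn) \<and> (\<exists>t>0. v + t *\<^sub>R em \<in> Fp)
     \<and> (\<forall>z. integral_vec z \<longrightarrow> (\<exists>a\<in>\<int>. \<exists>b\<in>\<int>. z - a *\<^sub>R ep - b *\<^sub>R em \<in> L))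
     \<and> (\<forall>w. \<exists>a b. w - a *\<^sub>R ep - b *\<^sub>R em \<in> L)
     \<and> hn ep = 0 \<and> hn em < 0 \<and> hp ep < 0 \<and> hp em = 0"
proof -
  have lin_ray: "h u = 0" if "linear h" "h (v + s *\<^sub>R u) = h v" "s > 0" for h :: "real^'d \<Rightarrow> real" and u s
  proof -
    have "h (v + s *\<^sub>R u) = h v + s * h u" using that(1) by (simp add: linear_add linear_scale)
    then show ?thesis using that by simp
  qed
  have lin_ray_lt: "h u < 0" if "linear h" "h (v + s *\<^sub>R u) < h v" "s > 0" for h :: "real^'d \<Rightarrow> real" and u s
  proof -
    have "h (v + s *\<^sub>R u) = h v + s * h u" using that(1) by (simp add: linear_add linear_scale)
    then have "s * h u < 0" using that by simp
    then show ?thesis using that(3) by (simp add: mult_less_0_iff)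
  qed
  have Pn_h: "hn u = 0 \<and> hp u < 0" if uP: "u \<in> Pn" for u
  proof -
    obtain s where s: "s > 0" "v + s *\<^sub>R u \<in> Fn" using Pn_ray[OF uP] by blast
    show ?thesis using lin_ray[OF hn(1) _ s(1)] lin_ray_lt[OF hp(1) _ s(1)] hn(3) hp(4) s(2) by blast
  qed
  have Pp_h: "hp u = 0 \<and> hn u < 0" if uP: "u \<in> Pp" for u
  proof -
    obtain s where s: "s > 0" "v + s *\<^sub>R u \<in> Fp" using Pp_ray[OF uP] by blast
    show ?thesis using lin_ray[OF hp(1) _ s(1)] lin_ray_lt[OF hn(1) _ s(1)] hp(3) hn(4) s(2) by blast
  qed
  have spanB: "span B = UNIV" by (rule lattice_span_UNIV[OF lb])
  have ind: "independent B" using lb unfolding lattice_basis_def by blast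
  have fin: "finite B" using independent_bound[OF ind] by blast
  have Pn_ne: "Pn \<noteq> {}"
  proof
    assume e: "Pn = {}"
    have "hp x = 0" if "x \<in> B" for x
      using part[OF that] e hp(2) Pp_h by blast
    then have all0: "hp x = 0" for x using linear_eq_0_on_span[OF hp(1)] spanB by blast
    obtain z where z: "z \<in> Fn" using ne(1) by blast
    have "hp (z - v) = 0" by (rule all0)
    then have "hp z = hp v" using hp(1) by (simp add: linear_diff)
    then show False using hp(4) z by force
  qed
  have Pp_ne: "Pp \<noteq> {}"
  proof
    assume e: "Pp = {}"
    have "hn x = 0" if "x \<in> B" for x
      using part[OF that] e hn(2) Pn_h by blast
    then have all0: "hn x = 0" for x using linear_eq_0_on_span[OF hn(1)] spanB by blast
    obtain z where z: "z \<in> Fp" using ne(2) by blast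
    have "hn (z - v) = 0" by (rule all0)
    then have "hn z = hn v" using hn(1) by (simp add: linear_diff)
    then show False using hn(4) z by force
  qed
  obtain ep where ep: "ep \<in> Pn" using Pn_ne by blast
  obtain em where em: "em \<in> Pp" using Pp_ne by blast
  have hep: "hn ep = 0" "hp ep < 0" using Pn_h[OF ep] by auto
  have hem: "hp em = 0" "hn em < 0" using Pp_h[OF em] by auto
  have neq: "ep \<noteq> em" using hep hem by auto
  have epB: "ep \<in> B" and emB: "em \<in> B" using ep em PnB PpB by auto
  have rest: "u \<in> L" if "u \<in> B" "u \<noteq> ep" "u \<noteq> em" for u
    using part[OF that(1)] Pn[OF ep] Pp[OF em] that(2,3) by blast
  have lat: "\<forall>z. integral_vec z \<longrightarrow> (\<exists>a\<in>\<int>. \<exists>b\<in>\<int>. z - a *\<^sub>R ep - b *\<^sub>R em \<in> L)"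
  proof (intro allI impI)
    fix z :: "real^'d" assume "integral_vec z"
    moreover have "z \<in> coord_space UNIV" by (simp add: coord_space_def)
    ultimately obtain c where c: "\<forall>b\<in>B. c b \<in> \<int>" "z = (\<Sum>b\<in>B. c b *\<^sub>R b)"
      using lb unfolding lattice_basis_def by blast
    have "z - c ep *\<^sub>R ep - c em *\<^sub>R em \<in> L"
      unfolding c(2) by (rule decomp_two[OF L fin epB emB neq rest])
    then show "\<exists>a\<in>\<int>. \<exists>b\<in>\<int>. z - a *\<^sub>R ep - b *\<^sub>R em \<in> L" using c(1) epB emB by blast
  qed
  have spn: "\<forall>w. \<exists>a b. w - a *\<^sub>R ep - b *\<^sub>R em \<in> L"
  proof
    fix w :: "real^'d"
    have "w \<in> span B" using spanB by simp
    then obtain c where c: "w = (\<Sum>b\<in>B. c b *\<^sub>R b)" using span_finite[OF fin] by auto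
    have "w - c ep *\<^sub>R ep - c em *\<^sub>R em \<in> L"
      unfolding c by (rule decomp_two[OF L fin epB emB neq rest])
    then show "\<exists>a b. w - a *\<^sub>R ep - b *\<^sub>R em \<in> L" by blast
  qed
  show ?thesis
    using epB emB Pn_ray[OF ep] Pp_ray[OF em] lat spn hep hem by blast
qed


lemma lin_space_subspace: "subspace (lin_space F)"
  unfolding lin_space_def by (rule subspace_span)

lemma diff_in_lin: "a \<in> F \<Longrightarrow> b \<in> F \<Longrightarrow> a - b \<in> lin_space F"
  unfolding lin_space_def by (rule span_base) blast

lemma lin_space_mono: "F \<subseteq> G \<Longrightarrow> lin_space F \<subseteq> lin_space G"
  unfolding lin_space_def by (rule span_mono) blast

lemma ray_in_lin: "v \<in> F \<Longrightarrow> v + t *\<^sub>R u \<in> F \<Longrightarrow> t > 0 \<Longrightarrow> u \<in> lin_space F"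
proof -
  assume "v \<in> F" "v + t *\<^sub>R u \<in> F" "t > 0"
  then have "(v + t *\<^sub>R u) - v \<in> lin_space F" by (intro diff_in_lin)
  then have "(1/t) *\<^sub>R ((v + t *\<^sub>R u) - v) \<in> lin_space F"
    using lin_space_subspace subspace_scale by blast
  then show ?thesis using \<open>t > 0\<close> by simp
qed

lemma kill_lin:
  fixes h :: "real^'d \<Rightarrow> real"
  assumes "linear h" "\<forall>z\<in>F. h z = c"
  shows "\<forall>l\<in>lin_space F. h l = 0"
proof
  fix l assume l: "l \<in> lin_space F"
  have "h x = 0" if "x \<in> {u - w | u w. u \<in> F \<and> w \<in> F}" for x
    using that assms by (auto simp: linear_diff)
  then show "h l = 0" using linear_eq_0_on_span[OF assms(1)] l unfolding lin_space_def by blast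
qed

lemma corner_full:
  fixes hn hp :: "real^'d \<Rightarrow> real"
  assumes iso: "face_poset_iso UNIV C \<phi>" and C: "convex C" and ab: "a \<noteq> b"
    and al: "al = 0 \<or> al = 1" and be: "be = 0 \<or> be = 1"
    and v: "v extreme_point_of C" and vF: "v \<in> inv_into {F. F face_of C} \<phi> (Kset a b al be)"
    and lb: "lattice_basis UNIV (prim_edge_dirs C v)"
    and Ldef: "L = lin_space (inv_into {F. F face_of C} \<phi> (Kset a b al be))"
    and hn: "linear hn" "\<forall>z\<in>inv_into {F. F face_of C} \<phi> (Kset a b al be). hn z = hn v"
       "\<forall>z\<in>inv_into {F. F face_of C} \<phi> (Kset a b (1-al) be). hn z = hn v"
       "\<forall>z\<in>inv_into {F. F face_of C} \<phi> (Kset a b al (1-be)). hn z < hn v"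
    and hp: "linear hp" "\<forall>z\<in>inv_into {F. F face_of C} \<phi> (Kset a b al be). hp z = hp v"
       "\<forall>z\<in>inv_into {F. F face_of C} \<phi> (Kset a b al (1-be)). hp z = hp v"
       "\<forall>z\<in>inv_into {F. F face_of C} \<phi> (Kset a b (1-al) be). hp z < hp v"
    and ne: "inv_into {F. F face_of C} \<phi> (Kset a b (1-al) be) \<noteq> {}"
        "inv_into {F. F face_of C} \<phi> (Kset a b al (1-be)) \<noteq> {}"
  shows "\<exists>ep em. ep \<in> prim_edge_dirs C v \<and> em \<in> prim_edge_dirs C v
     \<and> (\<exists>s>0. v + s *\<^sub>R ep \<in> inv_into {F. F face_of C} \<phi> (Kset a b (1-al) be))
     \<and> (\<exists>t>0. v + t *\<^sub>R em \<in> inv_into {F. F face_of C} \<phi> (Kset a b al (1-be)))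
     \<and> (\<forall>z. integral_vec z \<longrightarrow> (\<exists>a\<in>\<int>. \<exists>b\<in>\<int>. z - a *\<^sub>R ep - b *\<^sub>R em \<in> L))
     \<and> (\<forall>w. \<exists>a b. w - a *\<^sub>R ep - b *\<^sub>R em \<in> L)
     \<and> hn ep = 0 \<and> hn em < 0 \<and> hp ep < 0 \<and> hp em = 0"
proof -
  define B where "B = prim_edge_dirs C v"
  define Fc where "Fc = inv_into {F. F face_of C} \<phi> (Kset a b al be)"
  define Fn where "Fn = inv_into {F. F face_of C} \<phi> (Kset a b (1-al) be)"
  define Fp where "Fp = inv_into {F. F face_of C} \<phi> (Kset a b al (1-be))"
  define Pn where "Pn = {u \<in> B. \<exists>E\<in>edges_at C v. \<exists>s>0. v + s *\<^sub>R u \<in> E \<inter> Fn}"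
  define Pp where "Pp = {u \<in> B. \<exists>E\<in>edges_at C v. \<exists>s>0. v + s *\<^sub>R u \<in> E \<inter> Fp}"
  have L: "subspace L" unfolding Ldef by (rule lin_space_subspace)
  have vFc: "v \<in> Fc" using vF by (simp add: Fc_def)
  have ind: "independent B" using lb unfolding lattice_basis_def B_def by blast
  have part: "u \<in> L \<or> u \<in> Pn \<or> u \<in> Pp" if u: "u \<in> B" for u
  proof -
    have "(\<exists>t>0. v + t *\<^sub>R u \<in> Fc) \<or> (\<exists>E\<in>edges_at C v. \<exists>s>0. v + s *\<^sub>R u \<in> E \<inter> Fn)
       \<or> (\<exists>E\<in>edges_at C v. \<exists>s>0. v + s *\<^sub>R u \<in> E \<inter> Fp)"
      using corner_tri[OF iso C ab al be v vF u[unfolded B_def]] unfolding Fc_def Fn_def Fp_def .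
    moreover have "u \<in> L" if "\<exists>t>0. v + t *\<^sub>R u \<in> Fc"
      using that ray_in_lin[OF vFc] unfolding Ldef Fc_def[symmetric] by blast
    ultimately show ?thesis unfolding Pn_def Pp_def using u by blast
  qed
  have Pn_u: "u = u'" if "u \<in> Pn" "u' \<in> Pn" for u u'
    using that corner_uniq[OF iso C ab al be v vF ind[unfolded B_def]] unfolding Pn_def Fn_def B_def by blast
  have vF': "v \<in> inv_into {F. F face_of C} \<phi> (Kset b a be al)" using vF Kset_swap by metis
  have Pp_u: "u = u'" if "u \<in> Pp" "u' \<in> Pp" for u u'
  proof -
    have "Fp = inv_into {F. F face_of C} \<phi> (Kset b a (1-be) al)" unfolding Fp_def using Kset_swap by metis
    then show ?thesis
      using that corner_uniq[OF iso C ab[symmetric] be al v vF' ind[unfolded B_def]] unfolding Pp_def B_def by blast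
  qed
  have Pn_ray: "\<exists>s>0. v + s *\<^sub>R u \<in> Fn" if "u \<in> Pn" for u using that unfolding Pn_def by blast
  have Pp_ray: "\<exists>t>0. v + t *\<^sub>R u \<in> Fp" if "u \<in> Pp" for u using that unfolding Pp_def by blast
  have hnL: "\<forall>l\<in>L. hn l = 0" unfolding Ldef by (rule kill_lin[OF hn(1) hn(2)])
  have hpL: "\<forall>l\<in>L. hp l = 0" unfolding Ldef by (rule kill_lin[OF hp(1) hp(2)])
  have "\<exists>ep em. ep \<in> B \<and> em \<in> B \<and> (\<exists>s>0. v + s *\<^sub>R ep \<in> Fn) \<and> (\<exists>t>0. v + t *\<^sub>R em \<in> Fp)
     \<and> (\<forall>z. integral_vec z \<longrightarrow> (\<exists>a\<in>\<int>. \<exists>b\<in>\<int>. z - a *\<^sub>R ep - b *\<^sub>R em \<in> L))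
     \<and> (\<forall>w. \<exists>a b. w - a *\<^sub>R ep - b *\<^sub>R em \<in> L)
     \<and> hn ep = 0 \<and> hn em < 0 \<and> hp ep < 0 \<and> hp em = 0"
    by (rule corner_data[OF L lb[folded B_def] part Pn_u Pp_u _ _ Pn_ray Pp_ray hn(1) hnL _ _ hp(1) hpL])
       (use hn(3,4) hp(3,4) ne in \<open>auto simp: Pn_def Pp_def Fn_def Fp_def\<close>)
  then show ?thesis unfolding B_def Fn_def Fp_def .
qed


lemma corner_full2:
  fixes hn hp :: "real^'d \<Rightarrow> real"
  assumes iso: "face_poset_iso UNIV C \<phi>" and C: "convex C" and ab: "a \<noteq> b"
    and al: "al = 0 \<or> al = 1" and be: "be = 0 \<or> be = 1"
    and v: "v extreme_point_of C"
    and Fc: "Fc = inv_into {F. F face_of C} \<phi> (Kset a b al be)"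
    and Fn: "Fn = inv_into {F. F face_of C} \<phi> (Kset a b (1-al) be)"
    and Fp: "Fp = inv_into {F. F face_of C} \<phi> (Kset a b al (1-be))"
    and vF: "v \<in> Fc"
    and lb: "lattice_basis UNIV (prim_edge_dirs C v)"
    and Ldef: "L = lin_space Fc"
    and hn: "linear hn" "\<forall>z\<in>Fc. hn z = hn v" "\<forall>z\<in>Fn. hn z = hn v" "\<forall>z\<in>Fp. hn z < hn v"
    and hp: "linear hp" "\<forall>z\<in>Fc. hp z = hp v" "\<forall>z\<in>Fp. hp z = hp v" "\<forall>z\<in>Fn. hp z < hp v"
    and ne: "Fn \<noteq> {}" "Fp \<noteq> {}"
  shows "\<exists>ep em. ep \<in> prim_edge_dirs C v \<and> em \<in> prim_edge_dirs C v
     \<and> (\<exists>s>0. v + s *\<^sub>R ep \<in> Fn) \<and> (\<exists>t>0. v + t *\<^sub>R em \<in> Fp)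
     \<and> (\<forall>z. integral_vec z \<longrightarrow> (\<exists>a\<in>\<int>. \<exists>b\<in>\<int>. z - a *\<^sub>R ep - b *\<^sub>R em \<in> L))
     \<and> (\<forall>w. \<exists>a b. w - a *\<^sub>R ep - b *\<^sub>R em \<in> L)
     \<and> hn ep = 0 \<and> hn em < 0 \<and> hp ep < 0 \<and> hp em = 0"
  using corner_full[OF iso C ab al be v vF[unfolded Fc] lb Ldef[unfolded Fc] hn(1) hn(2)[unfolded Fc]
      hn(3)[unfolded Fn] hn(4)[unfolded Fp] hp(1) hp(2)[unfolded Fc] hp(3)[unfolded Fp] hp(4)[unfolded Fn]
      ne(1)[unfolded Fn] ne(2)[unfolded Fp]]
  unfolding Fn Fp .

lemma vertex_exists:
  fixes C :: "(real^'d) set"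
  assumes C: "convex C" "compact C" and F: "F face_of C" "F \<noteq> {}"
  shows "\<exists>v. v extreme_point_of C \<and> v \<in> F"
proof -
  have "compact F" by (rule face_of_imp_compact[OF C F(1)])
  moreover have "convex F" by (rule face_of_imp_convex[OF F(1)])
  ultimately obtain v where "v extreme_point_of F" using extreme_point_exists_convex F(2) by blast
  then show ?thesis using extreme_point_of_face[OF F(1)] by blast
qed

lemma facet_func:
  fixes C :: "(real^'d) set"
  assumes P: "polyhedron C" and G: "G face_of C"
  shows "\<exists>(h::real^'d \<Rightarrow> real) c. linear h \<and> (\<forall>z\<in>G. h z = c) \<and> (\<forall>z\<in>C. z \<notin> G \<longrightarrow> h z < c)"
proof -
  have "G exposed_face_of C" using exposed_face_of_polyhedron[OF P] G by blast
  then obtain n c where nc: "C \<subseteq> {z. n \<bullet> z \<le> c}" "G = C \<inter> {z. n \<bullet> z = c}"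
    unfolding exposed_face_of_def by blast
  show ?thesis
  proof (intro exI conjI)
    show "linear (\<lambda>z. n \<bullet> z)" by (rule bounded_linear.linear[OF bounded_linear_inner_right])
    show "\<forall>z\<in>G. n \<bullet> z = c" using nc(2) by blast
    show "\<forall>z\<in>C. z \<notin> G \<longrightarrow> n \<bullet> z < c"
    proof (intro ballI impI)
      fix z assume "z \<in> C" "z \<notin> G"
      then have "n \<bullet> z \<le> c" "n \<bullet> z \<noteq> c" using nc by auto
      then show "n \<bullet> z < c" by simp
    qed
  qed
qed

lemma fac_eq: "\<forall>z\<in>G. h z = (c::real) \<Longrightarrow> F \<subseteq> G \<Longrightarrow> v \<in> G \<Longrightarrow> \<forall>z\<in>F. h z = h v"
  by auto

lemma fac_lt: "\<forall>z\<in>C. z \<notin> G \<longrightarrow> h z < (c::real) \<Longrightarrow> \<forall>z\<in>G. h z = c \<Longrightarrow> F \<subseteq> C \<Longrightarrow> F \<inter> G = {} \<Longrightarrow> v \<in> G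
   \<Longrightarrow> \<forall>z\<in>F. h z < h v"
  by auto

lemma adj_geo:
  fixes L :: "(real^'d) set"
  assumes L: "subspace L" and v: "v \<in> F" and v': "v' \<in> F'" and lF: "lin_space F = L" and lF': "lin_space F' = L"
    and s: "s > 0" "v + s *\<^sub>R ep \<in> F'" and t: "t > 0" "v' + t *\<^sub>R em \<in> F"
  shows "\<exists>s>0. \<exists>t>0. s *\<^sub>R ep + t *\<^sub>R em \<in> L"
proof -
  have "(v + s *\<^sub>R ep) - v' \<in> L" using diff_in_lin[OF s(2) v'] lF' by simp
  moreover have "(v' + t *\<^sub>R em) - v \<in> L" using diff_in_lin[OF t(2) v] lF by simp
  ultimately have "((v + s *\<^sub>R ep) - v') + ((v' + t *\<^sub>R em) - v) \<in> L" using L subspace_add by blast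
  moreover have "((v + s *\<^sub>R ep) - v') + ((v' + t *\<^sub>R em) - v) = s *\<^sub>R ep + t *\<^sub>R em" by simp
  ultimately show ?thesis using s(1) t(1) by metis
qed

lemma lin_facet:
  fixes L G :: "(real^'d) set" and h :: "real^'d \<Rightarrow> real"
  assumes L: "subspace L" and LG: "L \<subseteq> lin_space G" and h: "linear h" and hG: "\<forall>z\<in>G. h z = c"
    and spn: "\<forall>w. \<exists>a b. w - a *\<^sub>R ep - b *\<^sub>R em \<in> L" and hL: "\<forall>l\<in>L. h l = 0"
    and hep: "h ep = 0" and hem: "h em < 0" and epG: "ep \<in> lin_space G"
  shows "lin_space G = {w. \<exists>l. w - l *\<^sub>R ep \<in> L}"
proof
  show "lin_space G \<subseteq> {w. \<exists>l. w - l *\<^sub>R ep \<in> L}"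
  proof
    fix w assume w: "w \<in> lin_space G"
    have hw: "h w = 0" using kill_lin[OF h hG] w by blast
    obtain a b where ab: "w - a *\<^sub>R ep - b *\<^sub>R em \<in> L" using spn by blast
    have "h w = a * h ep + b * h em" using lin_modL[OF h hL ab] .
    then have "b = 0" using hw hep hem by simp
    then show "w \<in> {w. \<exists>l. w - l *\<^sub>R ep \<in> L}" using ab by auto
  qed
next
  show "{w. \<exists>l. w - l *\<^sub>R ep \<in> L} \<subseteq> lin_space G"
  proof
    fix w assume "w \<in> {w. \<exists>l. w - l *\<^sub>R ep \<in> L}"
    then obtain l where l: "w - l *\<^sub>R ep \<in> L" by blast
    have "w - l *\<^sub>R ep \<in> lin_space G" using l LG by blast
    moreover have "l *\<^sub>R ep \<in> lin_space G" using epG lin_space_subspace subspace_scale by blast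
    ultimately have "(w - l *\<^sub>R ep) + l *\<^sub>R ep \<in> lin_space G" using lin_space_subspace subspace_add by blast
    then show "w \<in> lin_space G" by simp
  qed
qed

lemma lin_eq_swap:
  fixes L :: "(real^'d) set"
  assumes L: "subspace L" and e: "e1 + e3 \<in> L"
  shows "{w. \<exists>l. w - l *\<^sub>R e1 \<in> L} = {w. \<exists>l. w - l *\<^sub>R e3 \<in> L}"
proof -
  have *: "\<exists>l'. w - l' *\<^sub>R b \<in> L" if "w - l *\<^sub>R a \<in> L" "a + b \<in> L" for w l a b
  proof -
    have "(w - l *\<^sub>R a) + l *\<^sub>R (a + b) \<in> L" using that L subspace_add subspace_scale by blast
    moreover have "(w - l *\<^sub>R a) + l *\<^sub>R (a + b) = w - (-l) *\<^sub>R b" by (simp add: algebra_simps)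
    ultimately show ?thesis by metis
  qed
  have e': "e3 + e1 \<in> L" using e by (simp add: add.commute)
  show ?thesis using *[OF _ e] *[OF _ e'] by blast
qed


lemma Kset_ne:
  assumes "a \<noteq> b" "al = 0 \<or> al = 1" "be = 0 \<or> be = 1"
  shows "Kset a b al be \<noteq> {}"
proof -
  have "upd (upd 0 a al) b be \<in> Kset a b al be"
    using assms unfolding Kset_def by (auto simp: unit_cube_UNIV)
  then show ?thesis by blast
qed

lemma lab_nonempty:
  assumes iso: "face_poset_iso UNIV C \<phi>" and K: "K face_of unit_cube UNIV" "K \<noteq> {}"
  shows "inv_into {F. F face_of C} \<phi> K \<noteq> {}"
proof
  assume e: "inv_into {F. F face_of C} \<phi> K = {}"
  have "\<phi> (inv_into {F. F face_of C} \<phi> K) = K" using iso_inv[OF iso K(1)] by blast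
  then have "K = \<phi> {}" using e by simp
  then show False using iso_empty[OF iso] K(2) by simp
qed


theorem lemma3p6:
  fixes C :: "(real^'d) set" and \<phi> :: "(real^'d) set \<Rightarrow> (real^'d) set" and x y :: 'd
  assumes "CARD('d) \<ge> 3"
    and "smooth_polytope UNIV C"
    and "face_poset_iso UNIV C \<phi>"
    and "\<forall>(K::'d set) P. 1 \<le> card K \<and> card K < CARD('d) \<and> smooth_polytope K P \<and> comb_cube K P \<longrightarrow>
            (\<exists>F G. F facet_of P \<and> G facet_of P \<and> F \<noteq> G \<and> parallel_faces F G)"
    and "x \<noteq> y"
    and "\<forall>A\<in>{lab_face C \<phi> {x,y} {}, lab_face C \<phi> {x} {y}, lab_face C \<phi> {y} {x}, lab_face C \<phi> {} {x,y}}.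
         \<forall>B\<in>{lab_face C \<phi> {x,y} {}, lab_face C \<phi> {x} {y}, lab_face C \<phi> {y} {x}, lab_face C \<phi> {} {x,y}}.
           parallel_faces A B"
  shows "parallel_faces (lab_face C \<phi> {x} {}) (lab_face C \<phi> {} {x})
       \<or> parallel_faces (lab_face C \<phi> {y} {}) (lab_face C \<phi> {} {y})"
proof -
  note iso = assms(3)
  have xy: "x \<noteq> y" and yx: "y \<noteq> x" using assms(5) by auto
  have lbv: "\<And>v. v extreme_point_of C \<Longrightarrow> lattice_basis UNIV (prim_edge_dirs C v)"
    using assms(2) unfolding smooth_polytope_def by blast
  obtain S where S: "finite S" "C = convex hull S"
    using assms(2) unfolding smooth_polytope_def lattice_polytope_def by blast
  have polyC: "polytope C" using S polytope_convex_hull by simp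
  have Ccvx: "convex C" by (rule polytope_imp_convex[OF polyC])
  have Ccpt: "compact C" by (rule polytope_imp_compact[OF polyC])
  have Cph: "polyhedron C" by (rule polytope_imp_polyhedron[OF polyC])
  define K1 where "K1 = Kset x y 0 0"
  define K2 where "K2 = Kset x y 0 1"
  define K3 where "K3 = Kset x y 1 1"
  define K4 where "K4 = Kset x y 1 0"
  define H1 where "H1 = unit_cube UNIV \<inter> {z::real^'d. z$x = 0}"
  define H2 where "H2 = unit_cube UNIV \<inter> {z::real^'d. z$y = 1}"
  define H3 where "H3 = unit_cube UNIV \<inter> {z::real^'d. z$x = 1}"
  define H4 where "H4 = unit_cube UNIV \<inter> {z::real^'d. z$y = 0}"
  define F1 where "F1 = inv_into {F. F face_of C} \<phi> K1"
  define F2 where "F2 = inv_into {F. F face_of C} \<phi> K2"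
  define F3 where "F3 = inv_into {F. F face_of C} \<phi> K3"
  define F4 where "F4 = inv_into {F. F face_of C} \<phi> K4"
  define G1 where "G1 = inv_into {F. F face_of C} \<phi> H1"
  define G2 where "G2 = inv_into {F. F face_of C} \<phi> H2"
  define G3 where "G3 = inv_into {F. F face_of C} \<phi> H3"
  define G4 where "G4 = inv_into {F. F face_of C} \<phi> H4"
  have cf: "cube_face {x,y} {} = K1" "cube_face {x} {y} = K2" "cube_face {} {x,y} = K3"
    "cube_face {y} {x} = K4" "cube_face {x} {} = H1" "cube_face {} {y} = H2" "cube_face {} {x} = H3"
    "cube_face {y} {} = H4"
    unfolding cube_face_def K1_def K2_def K3_def K4_def H1_def H2_def H3_def H4_def Kset_def by auto
  have labF: "lab_face C \<phi> {x,y} {} = F1" "lab_face C \<phi> {x} {y} = F2" "lab_face C \<phi> {} {x,y} = F3"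
    "lab_face C \<phi> {y} {x} = F4" "lab_face C \<phi> {x} {} = G1" "lab_face C \<phi> {} {y} = G2"
    "lab_face C \<phi> {} {x} = G3" "lab_face C \<phi> {y} {} = G4"
    unfolding lab_face_def cf F1_def F2_def F3_def F4_def G1_def G2_def G3_def G4_def by simp_all
  have Kf: "K1 face_of unit_cube UNIV" "K2 face_of unit_cube UNIV" "K3 face_of unit_cube UNIV"
    "K4 face_of unit_cube UNIV"
    unfolding K1_def K2_def K3_def K4_def by (rule Kset_face; simp)+
  have Hf: "H1 face_of unit_cube UNIV" "H2 face_of unit_cube UNIV" "H3 face_of unit_cube UNIV"
    "H4 face_of unit_cube UNIV"
    unfolding H1_def H2_def H3_def H4_def by (rule cube_facet_face; simp)+
  have FF1: "F1 face_of C" "\<phi> F1 = K1" using iso_inv[OF iso Kf(1)] unfolding F1_def by auto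
  have FF2: "F2 face_of C" "\<phi> F2 = K2" using iso_inv[OF iso Kf(2)] unfolding F2_def by auto
  have FF3: "F3 face_of C" "\<phi> F3 = K3" using iso_inv[OF iso Kf(3)] unfolding F3_def by auto
  have FF4: "F4 face_of C" "\<phi> F4 = K4" using iso_inv[OF iso Kf(4)] unfolding F4_def by auto
  have GG1: "G1 face_of C" "\<phi> G1 = H1" using iso_inv[OF iso Hf(1)] unfolding G1_def by auto
  have GG2: "G2 face_of C" "\<phi> G2 = H2" using iso_inv[OF iso Hf(2)] unfolding G2_def by auto
  have GG3: "G3 face_of C" "\<phi> G3 = H3" using iso_inv[OF iso Hf(3)] unfolding G3_def by auto
  have GG4: "G4 face_of C" "\<phi> G4 = H4" using iso_inv[OF iso Hf(4)] unfolding G4_def by auto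
  have sh: "F \<subseteq> G" if "F face_of C" "G face_of C" "\<phi> F = K" "\<phi> G = H" "K \<subseteq> H" for F G K H
    using iso_mono[OF iso that(1,2)] that(3-5) by simp
  have dh: "F \<inter> G = {}" if "F face_of C" "G face_of C" "\<phi> F = K" "\<phi> G = H" "K \<inter> H = {}" for F G K H
    using iso_disjoint[OF iso that(1,2)] that(3-5) by simp
  have KH: "K1 \<subseteq> H1" "K2 \<subseteq> H1" "K2 \<subseteq> H2" "K3 \<subseteq> H2" "K3 \<subseteq> H3" "K4 \<subseteq> H3" "K4 \<subseteq> H4" "K1 \<subseteq> H4"
    unfolding K1_def K2_def K3_def K4_def H1_def H2_def H3_def H4_def Kset_def by auto
  have KHd: "K4 \<inter> H1 = {}" "K2 \<inter> H4 = {}" "K1 \<inter> H2 = {}" "K3 \<inter> H1 = {}" "K2 \<inter> H3 = {}"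
    "K4 \<inter> H2 = {}" "K3 \<inter> H4 = {}" "K1 \<inter> H3 = {}"
    unfolding K1_def K2_def K3_def K4_def H1_def H2_def H3_def H4_def Kset_def by auto
  have sub: "F1 \<subseteq> G1" "F2 \<subseteq> G1" "F2 \<subseteq> G2" "F3 \<subseteq> G2" "F3 \<subseteq> G3" "F4 \<subseteq> G3" "F4 \<subseteq> G4" "F1 \<subseteq> G4"
    by (rule sh[OF FF1(1) GG1(1) FF1(2) GG1(2) KH(1)], rule sh[OF FF2(1) GG1(1) FF2(2) GG1(2) KH(2)],
        rule sh[OF FF2(1) GG2(1) FF2(2) GG2(2) KH(3)], rule sh[OF FF3(1) GG2(1) FF3(2) GG2(2) KH(4)],
        rule sh[OF FF3(1) GG3(1) FF3(2) GG3(2) KH(5)], rule sh[OF FF4(1) GG3(1) FF4(2) GG3(2) KH(6)],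
        rule sh[OF FF4(1) GG4(1) FF4(2) GG4(2) KH(7)], rule sh[OF FF1(1) GG4(1) FF1(2) GG4(2) KH(8)])
  have dj: "F4 \<inter> G1 = {}" "F2 \<inter> G4 = {}" "F1 \<inter> G2 = {}" "F3 \<inter> G1 = {}" "F2 \<inter> G3 = {}"
    "F4 \<inter> G2 = {}" "F3 \<inter> G4 = {}" "F1 \<inter> G3 = {}"
    by (rule dh[OF FF4(1) GG1(1) FF4(2) GG1(2) KHd(1)], rule dh[OF FF2(1) GG4(1) FF2(2) GG4(2) KHd(2)],
        rule dh[OF FF1(1) GG2(1) FF1(2) GG2(2) KHd(3)], rule dh[OF FF3(1) GG1(1) FF3(2) GG1(2) KHd(4)],
        rule dh[OF FF2(1) GG3(1) FF2(2) GG3(2) KHd(5)], rule dh[OF FF4(1) GG2(1) FF4(2) GG2(2) KHd(6)],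
        rule dh[OF FF3(1) GG4(1) FF3(2) GG4(2) KHd(7)], rule dh[OF FF1(1) GG3(1) FF1(2) GG3(2) KHd(8)])
  have Kne: "K1 \<noteq> {}" "K2 \<noteq> {}" "K3 \<noteq> {}" "K4 \<noteq> {}"
    unfolding K1_def K2_def K3_def K4_def by (rule Kset_ne[OF xy]; simp)+
  have ne: "F1 \<noteq> {}" "F2 \<noteq> {}" "F3 \<noteq> {}" "F4 \<noteq> {}"
    unfolding F1_def F2_def F3_def F4_def
    by (rule lab_nonempty[OF iso Kf(1) Kne(1)], rule lab_nonempty[OF iso Kf(2) Kne(2)],
        rule lab_nonempty[OF iso Kf(3) Kne(3)], rule lab_nonempty[OF iso Kf(4) Kne(4)])
  have FC: "F1 \<subseteq> C" "F2 \<subseteq> C" "F3 \<subseteq> C" "F4 \<subseteq> C"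
    by (rule face_of_imp_subset[OF FF1(1)], rule face_of_imp_subset[OF FF2(1)],
        rule face_of_imp_subset[OF FF3(1)], rule face_of_imp_subset[OF FF4(1)])
  have z01: "(0::real) = 0 \<or> (0::real) = 1" "(1::real) = 0 \<or> (1::real) = 1" by simp_all
  define L where "L = lin_space F1"
  have L: "subspace L" unfolding L_def by (rule lin_space_subspace)
  have par: "\<forall>A\<in>{F1, F2, F4, F3}. \<forall>B\<in>{F1, F2, F4, F3}. parallel_faces A B"
    using assms(6) unfolding labF .
  have p12: "parallel_faces F1 F2" and p13: "parallel_faces F1 F3" and p14: "parallel_faces F1 F4"
    using par by (simp_all only: ball_simps insert_iff empty_iff simp_thms)
  have lF: "lin_space F1 = L" "lin_space F2 = L" "lin_space F3 = L" "lin_space F4 = L"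
    using p12 p13 p14 unfolding L_def parallel_faces_def by simp_all
  obtain v1 where v1: "v1 extreme_point_of C" "v1 \<in> F1" using vertex_exists[OF Ccvx Ccpt FF1(1) ne(1)] by blast
  obtain v2 where v2: "v2 extreme_point_of C" "v2 \<in> F2" using vertex_exists[OF Ccvx Ccpt FF2(1) ne(2)] by blast
  obtain v3 where v3: "v3 extreme_point_of C" "v3 \<in> F3" using vertex_exists[OF Ccvx Ccpt FF3(1) ne(3)] by blast
  obtain v4 where v4: "v4 extreme_point_of C" "v4 \<in> F4" using vertex_exists[OF Ccvx Ccpt FF4(1) ne(4)] by blast
  obtain h1 :: "real^'d \<Rightarrow> real" and c1 :: real where h1: "linear h1" "\<forall>z\<in>G1. h1 z = c1" "\<forall>z\<in>C. z \<notin> G1 \<longrightarrow> h1 z < c1"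
    using facet_func[OF Cph GG1(1)] by blast
  obtain h2 :: "real^'d \<Rightarrow> real" and c2 :: real where h2: "linear h2" "\<forall>z\<in>G2. h2 z = c2" "\<forall>z\<in>C. z \<notin> G2 \<longrightarrow> h2 z < c2"
    using facet_func[OF Cph GG2(1)] by blast
  obtain h3 :: "real^'d \<Rightarrow> real" and c3 :: real where h3: "linear h3" "\<forall>z\<in>G3. h3 z = c3" "\<forall>z\<in>C. z \<notin> G3 \<longrightarrow> h3 z < c3"
    using facet_func[OF Cph GG3(1)] by blast
  obtain h4 :: "real^'d \<Rightarrow> real" and c4 :: real where h4: "linear h4" "\<forall>z\<in>G4. h4 z = c4" "\<forall>z\<in>C. z \<notin> G4 \<longrightarrow> h4 z < c4"
    using facet_func[OF Cph GG4(1)] by blast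
  have vG: "v1 \<in> G1" "v1 \<in> G4" "v2 \<in> G1" "v2 \<in> G2" "v3 \<in> G2" "v3 \<in> G3" "v4 \<in> G3" "v4 \<in> G4"
    using v1(2) v2(2) v3(2) v4(2) sub by blast+
  obtain ep1 em1 where c1: "ep1 \<in> prim_edge_dirs C v1" "em1 \<in> prim_edge_dirs C v1"
     "\<exists>s>0. v1 + s *\<^sub>R ep1 \<in> F2" "\<exists>t>0. v1 + t *\<^sub>R em1 \<in> F4"
     "\<forall>z. integral_vec z \<longrightarrow> (\<exists>a\<in>\<int>. \<exists>b\<in>\<int>. z - a *\<^sub>R ep1 - b *\<^sub>R em1 \<in> L)"
     "\<forall>w. \<exists>a b. w - a *\<^sub>R ep1 - b *\<^sub>R em1 \<in> L"
     "h1 ep1 = 0" "h1 em1 < 0" "h4 ep1 < 0" "h4 em1 = 0"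
  proof -
    have e1: "F1 = inv_into {F. F face_of C} \<phi> (Kset y x 0 0)" by (simp add: F1_def K1_def Kset_swap[of x y 0 0])
    have e2: "F2 = inv_into {F. F face_of C} \<phi> (Kset y x (1-0) 0)" by (simp add: F2_def K2_def Kset_swap[of x y 0 1])
    have e3: "F4 = inv_into {F. F face_of C} \<phi> (Kset y x 0 (1-0))" by (simp add: F4_def K4_def Kset_swap[of x y 1 0])
    show ?thesis
      using corner_full2[OF iso Ccvx yx z01(1) z01(1) v1(1) e1 e2 e3 v1(2) lbv[OF v1(1)] lF(1)[symmetric]
        h1(1) fac_eq[OF h1(2) sub(1) vG(1)] fac_eq[OF h1(2) sub(2) vG(1)] fac_lt[OF h1(3) h1(2) FC(4) dj(1) vG(1)]
        h4(1) fac_eq[OF h4(2) sub(8) vG(2)] fac_eq[OF h4(2) sub(7) vG(2)] fac_lt[OF h4(3) h4(2) FC(2) dj(2) vG(2)]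
        ne(2) ne(4)] that by blast
  qed
  obtain ep2 em2 where c2: "ep2 \<in> prim_edge_dirs C v2" "em2 \<in> prim_edge_dirs C v2"
     "\<exists>s>0. v2 + s *\<^sub>R ep2 \<in> F3" "\<exists>t>0. v2 + t *\<^sub>R em2 \<in> F1"
     "\<forall>z. integral_vec z \<longrightarrow> (\<exists>a\<in>\<int>. \<exists>b\<in>\<int>. z - a *\<^sub>R ep2 - b *\<^sub>R em2 \<in> L)"
     "\<forall>w. \<exists>a b. w - a *\<^sub>R ep2 - b *\<^sub>R em2 \<in> L"
     "h2 ep2 = 0" "h2 em2 < 0" "h1 ep2 < 0" "h1 em2 = 0"
  proof -
    have e4: "F2 = inv_into {F. F face_of C} \<phi> (Kset x y 0 1)" by (simp add: F2_def K2_def)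
    have e5: "F3 = inv_into {F. F face_of C} \<phi> (Kset x y (1-0) 1)" by (simp add: F3_def K3_def)
    have e6: "F1 = inv_into {F. F face_of C} \<phi> (Kset x y 0 (1-1))" by (simp add: F1_def K1_def)
    show ?thesis
      using corner_full2[OF iso Ccvx xy z01(1) z01(2) v2(1) e4 e5 e6 v2(2) lbv[OF v2(1)] lF(2)[symmetric]
        h2(1) fac_eq[OF h2(2) sub(3) vG(4)] fac_eq[OF h2(2) sub(4) vG(4)] fac_lt[OF h2(3) h2(2) FC(1) dj(3) vG(4)]
        h1(1) fac_eq[OF h1(2) sub(2) vG(3)] fac_eq[OF h1(2) sub(1) vG(3)] fac_lt[OF h1(3) h1(2) FC(3) dj(4) vG(3)]
        ne(3) ne(1)] that by blast
  qed
  obtain ep3 em3 where c3: "ep3 \<in> prim_edge_dirs C v3" "em3 \<in> prim_edge_dirs C v3"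
     "\<exists>s>0. v3 + s *\<^sub>R ep3 \<in> F4" "\<exists>t>0. v3 + t *\<^sub>R em3 \<in> F2"
     "\<forall>z. integral_vec z \<longrightarrow> (\<exists>a\<in>\<int>. \<exists>b\<in>\<int>. z - a *\<^sub>R ep3 - b *\<^sub>R em3 \<in> L)"
     "\<forall>w. \<exists>a b. w - a *\<^sub>R ep3 - b *\<^sub>R em3 \<in> L"
     "h3 ep3 = 0" "h3 em3 < 0" "h2 ep3 < 0" "h2 em3 = 0"
  proof -
    have e7: "F3 = inv_into {F. F face_of C} \<phi> (Kset y x 1 1)" by (simp add: F3_def K3_def Kset_swap[of x y 1 1])
    have e8: "F4 = inv_into {F. F face_of C} \<phi> (Kset y x (1-1) 1)" by (simp add: F4_def K4_def Kset_swap[of x y 1 0])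
    have e9: "F2 = inv_into {F. F face_of C} \<phi> (Kset y x 1 (1-1))" by (simp add: F2_def K2_def Kset_swap[of x y 0 1])
    show ?thesis
      using corner_full2[OF iso Ccvx yx z01(2) z01(2) v3(1) e7 e8 e9 v3(2) lbv[OF v3(1)] lF(3)[symmetric]
        h3(1) fac_eq[OF h3(2) sub(5) vG(6)] fac_eq[OF h3(2) sub(6) vG(6)] fac_lt[OF h3(3) h3(2) FC(2) dj(5) vG(6)]
        h2(1) fac_eq[OF h2(2) sub(4) vG(5)] fac_eq[OF h2(2) sub(3) vG(5)] fac_lt[OF h2(3) h2(2) FC(4) dj(6) vG(5)]
        ne(4) ne(2)] that by blast
  qed
  obtain ep4 em4 where c4: "ep4 \<in> prim_edge_dirs C v4" "em4 \<in> prim_edge_dirs C v4"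
     "\<exists>s>0. v4 + s *\<^sub>R ep4 \<in> F1" "\<exists>t>0. v4 + t *\<^sub>R em4 \<in> F3"
     "\<forall>z. integral_vec z \<longrightarrow> (\<exists>a\<in>\<int>. \<exists>b\<in>\<int>. z - a *\<^sub>R ep4 - b *\<^sub>R em4 \<in> L)"
     "\<forall>w. \<exists>a b. w - a *\<^sub>R ep4 - b *\<^sub>R em4 \<in> L"
     "h4 ep4 = 0" "h4 em4 < 0" "h3 ep4 < 0" "h3 em4 = 0"
  proof -
    have e10: "F4 = inv_into {F. F face_of C} \<phi> (Kset x y 1 0)" by (simp add: F4_def K4_def)
    have e11: "F1 = inv_into {F. F face_of C} \<phi> (Kset x y (1-1) 0)" by (simp add: F1_def K1_def)
    have e12: "F3 = inv_into {F. F face_of C} \<phi> (Kset x y 1 (1-0))" by (simp add: F3_def K3_def)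
    show ?thesis
      using corner_full2[OF iso Ccvx xy z01(2) z01(1) v4(1) e10 e11 e12 v4(2) lbv[OF v4(1)] lF(4)[symmetric]
        h4(1) fac_eq[OF h4(2) sub(7) vG(8)] fac_eq[OF h4(2) sub(8) vG(8)] fac_lt[OF h4(3) h4(2) FC(3) dj(7) vG(8)]
        h3(1) fac_eq[OF h3(2) sub(6) vG(7)] fac_eq[OF h3(2) sub(5) vG(7)] fac_lt[OF h3(3) h3(2) FC(1) dj(8) vG(7)]
        ne(1) ne(3)] that by blast
  qed
  have intg: "integral_vec u" if "u \<in> prim_edge_dirs C v" for u v
    using that unfolding prim_edge_dirs_def by blast
  have adj12: "\<exists>s>0. \<exists>t>0. s *\<^sub>R ep1 + t *\<^sub>R em2 \<in> L"
  proof -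
    obtain s where s: "s > 0" "v1 + s *\<^sub>R ep1 \<in> F2" using c1(3) by blast
    obtain t where t: "t > 0" "v2 + t *\<^sub>R em2 \<in> F1" using c2(4) by blast
    show ?thesis by (rule adj_geo[OF L v1(2) v2(2) lF(1) lF(2) s t])
  qed
  have adj23: "\<exists>s>0. \<exists>t>0. s *\<^sub>R ep2 + t *\<^sub>R em3 \<in> L"
  proof -
    obtain s where s: "s > 0" "v2 + s *\<^sub>R ep2 \<in> F3" using c2(3) by blast
    obtain t where t: "t > 0" "v3 + t *\<^sub>R em3 \<in> F2" using c3(4) by blast
    show ?thesis by (rule adj_geo[OF L v2(2) v3(2) lF(2) lF(3) s t])
  qed
  have adj34: "\<exists>s>0. \<exists>t>0. s *\<^sub>R ep3 + t *\<^sub>R em4 \<in> L"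
  proof -
    obtain s where s: "s > 0" "v3 + s *\<^sub>R ep3 \<in> F4" using c3(3) by blast
    obtain t where t: "t > 0" "v4 + t *\<^sub>R em4 \<in> F3" using c4(4) by blast
    show ?thesis by (rule adj_geo[OF L v3(2) v4(2) lF(3) lF(4) s t])
  qed
  have adj41: "\<exists>s>0. \<exists>t>0. s *\<^sub>R ep4 + t *\<^sub>R em1 \<in> L"
  proof -
    obtain s where s: "s > 0" "v4 + s *\<^sub>R ep4 \<in> F1" using c4(3) by blast
    obtain t where t: "t > 0" "v1 + t *\<^sub>R em1 \<in> F4" using c1(4) by blast
    show ?thesis by (rule adj_geo[OF L v4(2) v1(2) lF(4) lF(1) s t])
  qed
  have hL1: "\<forall>l\<in>L. h1 l = 0" using kill_lin[OF h1(1), of F1 c1] h1(2) sub(1) lF(1) by blast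
  have hL2: "\<forall>l\<in>L. h2 l = 0" using kill_lin[OF h2(1), of F2 c2] h2(2) sub(3) lF(2) by blast
  have hL3: "\<forall>l\<in>L. h3 l = 0" using kill_lin[OF h3(1), of F3 c3] h3(2) sub(5) lF(3) by blast
  have hL4: "\<forall>l\<in>L. h4 l = 0" using kill_lin[OF h4(1), of F4 c4] h4(2) sub(7) lF(4) by blast
  have key: "ep1 + ep3 \<in> L \<or> ep2 + ep4 \<in> L"
    by (rule B2[OF L c1(5)[rule_format] c2(5)[rule_format] c3(5)[rule_format] c4(5)[rule_format]
        intg[OF c1(1)] intg[OF c1(2)] intg[OF c2(1)] intg[OF c2(2)]
        intg[OF c3(1)] intg[OF c3(2)] intg[OF c4(1)] intg[OF c4(2)]
        adj12 adj23 adj34 adj41 h1(1) h2(1) h3(1) h4(1) hL1 hL2 hL3 hL4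
        c1(7) c2(9) c1(8) c2(7) c3(9) c2(8) c3(7) c4(9) c3(8) c4(7) c1(9) c4(8)])
  have LG1: "L \<subseteq> lin_space G1" using lin_space_mono[OF sub(1)] lF(1) by simp
  have LG2: "L \<subseteq> lin_space G2" using lin_space_mono[OF sub(3)] lF(2) by simp
  have LG3: "L \<subseteq> lin_space G3" using lin_space_mono[OF sub(5)] lF(3) by simp
  have LG4: "L \<subseteq> lin_space G4" using lin_space_mono[OF sub(7)] lF(4) by simp
  have epG1: "ep1 \<in> lin_space G1"
  proof -
    obtain s where s: "s > 0" "v1 + s *\<^sub>R ep1 \<in> F2" using c1(3) by blast
    show ?thesis by (rule ray_in_lin[OF vG(1) _ s(1)]) (use s(2) sub(2) in blast)
  qed
  have epG2: "ep2 \<in> lin_space G2"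
  proof -
    obtain s where s: "s > 0" "v2 + s *\<^sub>R ep2 \<in> F3" using c2(3) by blast
    show ?thesis by (rule ray_in_lin[OF vG(4) _ s(1)]) (use s(2) sub(4) in blast)
  qed
  have epG3: "ep3 \<in> lin_space G3"
  proof -
    obtain s where s: "s > 0" "v3 + s *\<^sub>R ep3 \<in> F4" using c3(3) by blast
    show ?thesis by (rule ray_in_lin[OF vG(6) _ s(1)]) (use s(2) sub(6) in blast)
  qed
  have epG4: "ep4 \<in> lin_space G4"
  proof -
    obtain s where s: "s > 0" "v4 + s *\<^sub>R ep4 \<in> F1" using c4(3) by blast
    show ?thesis by (rule ray_in_lin[OF vG(8) _ s(1)]) (use s(2) sub(8) in blast)
  qed
  have lG1: "lin_space G1 = {w. \<exists>l. w - l *\<^sub>R ep1 \<in> L}"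
    by (rule lin_facet[OF L LG1 h1(1) h1(2) c1(6) hL1 c1(7) c1(8) epG1])
  have lG2: "lin_space G2 = {w. \<exists>l. w - l *\<^sub>R ep2 \<in> L}"
    by (rule lin_facet[OF L LG2 h2(1) h2(2) c2(6) hL2 c2(7) c2(8) epG2])
  have lG3: "lin_space G3 = {w. \<exists>l. w - l *\<^sub>R ep3 \<in> L}"
    by (rule lin_facet[OF L LG3 h3(1) h3(2) c3(6) hL3 c3(7) c3(8) epG3])
  have lG4: "lin_space G4 = {w. \<exists>l. w - l *\<^sub>R ep4 \<in> L}"
    by (rule lin_facet[OF L LG4 h4(1) h4(2) c4(6) hL4 c4(7) c4(8) epG4])
  from key show ?thesis
  proof
    assume "ep1 + ep3 \<in> L"
    then have "lin_space G1 = lin_space G3" unfolding lG1 lG3 by (rule lin_eq_swap[OF L])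
    then show ?thesis unfolding labF parallel_faces_def by blast
  next
    assume "ep2 + ep4 \<in> L"
    then have "lin_space G2 = lin_space G4" unfolding lG2 lG4 by (rule lin_eq_swap[OF L])
    then show ?thesis unfolding labF parallel_faces_def by simp
  qed
qed

end
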